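(* The function $\sigma_+(u)$ is non-increasing in $u\geq 1$, the function $\sigma_-(u)$ is non-decreasing in $u\geq 1$, and $\sigma_+(u)\to 1$ and $\sigma_-(u)\to 1$ as $u\to\infty$.
   Context: For $z\geq 2$ let $P(z):=\prod_{p\leq z}p$ (product over primes). For real $x$ and $y,z>0$ let $S(x,y,z):=\#\{n\in(x,x+y]\cap\mathbb{Z}:\ \gcd(n,P(z))=1\}$, and define $S^+(y,z):=\max_x S(x,y,z)$ and $S^-(y,z):=\min_x S(x,y,z)$. For each fixed $u\geq 1$ define $$\sigma_+(u):=\limsup_{z\to\infty} \frac{S^+(z^u,z)}{\prod_{p\leq z}(1-\frac1p)\cdot z^u},\qquad \sigma_-(u):=\liminf_{z\to\infty} \frac{S^-(z^u,z)}{\prod_{p\leq z}(1-\frac1p)\cdot z^u}.$$ *)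

theory Defs
  imports "HOL-Analysis.Analysis" "HOL-Computational_Algebra.Primes"
begin

definition primorial_P :: "real \<Rightarrow> int" where
  "primorial_P z = (\<Prod>p\<in>{p::nat. prime p \<and> real p \<le> z}. int p)"

definition sieve_S :: "real \<Rightarrow> real \<Rightarrow> real \<Rightarrow> nat" where
  "sieve_S x y z = card {n::int. x < real_of_int n \<and> real_of_int n \<le> x + y
                                 \<and> coprime n (primorial_P z)}"

definition sieve_S_plus :: "real \<Rightarrow> real \<Rightarrow> nat" where
  "sieve_S_plus y z = Sup (range (\<lambda>x. sieve_S x y z))"

definition sieve_S_minus :: "real \<Rightarrow> real \<Rightarrow> nat" where
  "sieve_S_minus y z = Inf (range (\<lambda>x. sieve_S x y z))"

definition mertens_prod :: "real \<Rightarrow> real" where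
  "mertens_prod z = (\<Prod>p\<in>{p::nat. prime p \<and> real p \<le> z}. 1 - 1 / real p)"

definition sigma_plus :: "real \<Rightarrow> ereal" where
  "sigma_plus u = Limsup at_top
     (\<lambda>z. ereal (real (sieve_S_plus (z powr u) z) / (mertens_prod z * z powr u)))"

definition sigma_minus :: "real \<Rightarrow> ereal" where
  "sigma_minus u = Liminf at_top
     (\<lambda>z. ereal (real (sieve_S_minus (z powr u) z) / (mertens_prod z * z powr u)))"

end

theory Submission imports Defs begin

definition hT :: "nat \<Rightarrow> nat set \<Rightarrow> real" where
  "hT k D = (if card D \<le> k then (-1) ^ card D else 0)"
definition hE :: "nat \<Rightarrow> nat set \<Rightarrow> real" where
  "hE m D = (if card D = m then 1 else 0)"
definition TT :: "nat \<Rightarrow> (nat \<Rightarrow> real) \<Rightarrow> nat set \<Rightarrow> real" where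
  "TT k g B = (\<Sum>D\<in>Pow B. hT k D * (\<Prod>p\<in>D. g p))"
definition EE :: "nat \<Rightarrow> (nat \<Rightarrow> real) \<Rightarrow> nat set \<Rightarrow> real" where
  "EE m g B = (\<Sum>D\<in>Pow B. hE m D * (\<Prod>p\<in>D. g p))"
definition WW :: "(nat \<Rightarrow> real) \<Rightarrow> nat set \<Rightarrow> real" where
  "WW g B = (\<Prod>p\<in>B. 1 - g p)"

lemma sum_Pow_insert:
  fixes F :: "nat set \<Rightarrow> real"
  assumes "finite B" "q \<notin> B"
  shows "(\<Sum>D\<in>Pow (insert q B). F D) = (\<Sum>D\<in>Pow B. F D) + (\<Sum>D\<in>Pow B. F (insert q D))"
proof -
  have inj: "inj_on (insert q) (Pow B)"
    using assms(2) by (auto simp: inj_on_def)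
  have disj: "Pow B \<inter> insert q ` Pow B = {}" using assms(2) by auto
  have "(\<Sum>D\<in>Pow (insert q B). F D) = (\<Sum>D\<in>Pow B. F D) + (\<Sum>D\<in>insert q ` Pow B. F D)"
    unfolding Pow_insert by (rule sum.union_disjoint) (use assms disj in auto)
  also have "(\<Sum>D\<in>insert q ` Pow B. F D) = (\<Sum>D\<in>Pow B. F (insert q D))"
    by (rule sum.reindex_cong[OF inj]) auto
  finally show ?thesis .
qed

lemma TT_0: "finite B \<Longrightarrow> TT 0 g B = 1"
proof -
  assume B: "finite B"
  have "TT 0 g B = (\<Sum>D\<in>Pow B. if D = {} then 1 else 0)"
    unfolding TT_def hT_def
    by (rule sum.cong) (use B in \<open>auto dest: finite_subset\<close>)
  also have "\<dots> = 1" using B by (simp add: sum.delta)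
  finally show ?thesis .
qed

lemma EE_0: "finite B \<Longrightarrow> EE 0 g B = 1"
proof -
  assume B: "finite B"
  have "EE 0 g B = (\<Sum>D\<in>Pow B. if D = {} then 1 else 0)"
    unfolding EE_def hE_def
    by (rule sum.cong) (use B in \<open>auto dest: finite_subset\<close>)
  also have "\<dots> = 1" using B by (simp add: sum.delta)
  finally show ?thesis .
qed

lemma TT_empty: "TT k g {} = 1" by (simp add: TT_def hT_def)
lemma EE_empty: "EE m g {} = (if m = 0 then 1 else 0)" by (simp add: EE_def hE_def)

lemma TT_insert:
  assumes "finite B" "q \<notin> B"
  shows "TT (Suc k) g (insert q B) = TT (Suc k) g B - g q * TT k g B"
proof -
  have "TT (Suc k) g (insert q B) = TT (Suc k) g B + (\<Sum>D\<in>Pow B. hT (Suc k) (insert q D) * (\<Prod>p\<in>insert q D. g p))"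
    unfolding TT_def by (rule sum_Pow_insert[OF assms])
  also have "(\<Sum>D\<in>Pow B. hT (Suc k) (insert q D) * (\<Prod>p\<in>insert q D. g p)) = (\<Sum>D\<in>Pow B. - g q * (hT k D * (\<Prod>p\<in>D. g p)))"
  proof (rule sum.cong)
    fix D assume "D \<in> Pow B"
    then have D: "finite D" "q \<notin> D" using assms finite_subset by auto
    show "hT (Suc k) (insert q D) * (\<Prod>p\<in>insert q D. g p) = - g q * (hT k D * (\<Prod>p\<in>D. g p))"
      using D by (simp add: hT_def)
  qed simp
  also have "\<dots> = - g q * TT k g B" unfolding TT_def by (simp add: sum_distrib_left)
  finally show ?thesis by simp
qed

lemma EE_insert:
  assumes "finite B" "q \<notin> B"
  shows "EE (Suc k) g (insert q B) = EE (Suc k) g B + g q * EE k g B"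
proof -
  have "EE (Suc k) g (insert q B) = EE (Suc k) g B + (\<Sum>D\<in>Pow B. hE (Suc k) (insert q D) * (\<Prod>p\<in>insert q D. g p))"
    unfolding EE_def by (rule sum_Pow_insert[OF assms])
  also have "(\<Sum>D\<in>Pow B. hE (Suc k) (insert q D) * (\<Prod>p\<in>insert q D. g p)) = (\<Sum>D\<in>Pow B. g q * (hE k D * (\<Prod>p\<in>D. g p)))"
  proof (rule sum.cong)
    fix D assume "D \<in> Pow B"
    then have D: "finite D" "q \<notin> D" using assms finite_subset by auto
    show "hE (Suc k) (insert q D) * (\<Prod>p\<in>insert q D. g p) = g q * (hE k D * (\<Prod>p\<in>D. g p))"
      using D by (simp add: hE_def)
  qed simp
  also have "\<dots> = g q * EE k g B" unfolding EE_def by (simp add: sum_distrib_left)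
  finally show ?thesis by simp
qed

lemma WW_bounds:
  assumes "\<forall>p\<in>B. 0 \<le> g p \<and> g p \<le> 1"
  shows "0 \<le> WW g B \<and> WW g B \<le> 1"
  unfolding WW_def using assms by (auto intro!: prod_nonneg prod_le_1)

lemma EE_nonneg:
  assumes "\<forall>p\<in>B. 0 \<le> g p"
  shows "0 \<le> EE m g B"
  unfolding EE_def hE_def using assms
  by (intro sum_nonneg) (auto intro!: prod_nonneg)

lemma WW_insert: "finite B \<Longrightarrow> q \<notin> B \<Longrightarrow> WW g (insert q B) = (1 - g q) * WW g B"
  by (simp add: WW_def)

lemma bonferroni:
  assumes "finite B" "\<forall>p\<in>B. 0 \<le> g p \<and> g p \<le> 1"
  shows "0 \<le> (-1)^k * (TT k g B - WW g B) \<and> (-1)^k * (TT k g B - WW g B) \<le> EE (Suc k) g B"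
  using assms
proof (induction B arbitrary: k rule: finite_induct)
  case empty
  then show ?case by (simp add: TT_empty EE_empty WW_def)
next
  case (insert q B)
  have gq: "0 \<le> g q" "g q \<le> 1" using insert.prems by auto
  have hB: "\<forall>p\<in>B. 0 \<le> g p \<and> g p \<le> 1" using insert.prems by auto
  have W: "0 \<le> WW g B" "WW g B \<le> 1" using WW_bounds[OF hB] by auto
  show ?case
  proof (cases k)
    case 0
    have IH: "0 \<le> 1 - WW g B" "1 - WW g B \<le> EE 1 g B"
      using insert.IH[OF hB, of 0] TT_0[OF insert.hyps(1)] by auto
    have E: "EE 1 g (insert q B) = EE 1 g B + g q"
      using EE_insert[OF insert.hyps(1,2), of 0 g] EE_0[OF insert.hyps(1)] by simp
    have "TT 0 g (insert q B) = 1" using TT_0 insert.hyps(1) by simp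
    then show ?thesis using 0 IH E W gq WW_insert[OF insert.hyps(1,2), of g]
      by (auto simp: algebra_simps intro: mult_left_le_one_le mult_nonneg_nonneg)
         (smt (verit, best) mult_left_le mult_nonneg_nonneg)+
  next
    case (Suc j)
    have IH1: "0 \<le> (-1)^Suc j * (TT (Suc j) g B - WW g B)" "(-1)^Suc j * (TT (Suc j) g B - WW g B) \<le> EE (Suc (Suc j)) g B"
      using insert.IH[OF hB, of "Suc j"] by auto
    have IH2: "0 \<le> (-1)^j * (TT j g B - WW g B)" "(-1)^j * (TT j g B - WW g B) \<le> EE (Suc j) g B"
      using insert.IH[OF hB, of j] by auto
    have key: "(-1)^Suc j * (TT (Suc j) g (insert q B) - WW g (insert q B))
       = (-1)^Suc j * (TT (Suc j) g B - WW g B) + g q * ((-1)^j * (TT j g B - WW g B))"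
      unfolding TT_insert[OF insert.hyps(1,2), of j g] WW_insert[OF insert.hyps(1,2), of g]
      by (simp add: algebra_simps)
    have E: "EE (Suc (Suc j)) g (insert q B) = EE (Suc (Suc j)) g B + g q * EE (Suc j) g B"
      using EE_insert[OF insert.hyps(1,2)] by simp
    have m1: "0 \<le> g q * ((-1)^j * (TT j g B - WW g B))"
      using IH2(1) gq(1) by simp
    have m2: "g q * ((-1)^j * (TT j g B - WW g B)) \<le> g q * EE (Suc j) g B"
      using IH2(2) gq(1) by (rule mult_left_mono)
    show ?thesis unfolding Suc key E
      using IH1 m1 m2 by linarith
  qed
qed

lemma pow_lower: "0 \<le> (S::real) \<Longrightarrow> 0 \<le> g \<Longrightarrow> S ^ Suc n + real (Suc n) * g * S ^ n \<le> (S + g) ^ Suc n"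
proof (induction n)
  case 0 then show ?case by simp
next
  case (Suc n)
  have "S ^ Suc (Suc n) + real (Suc (Suc n)) * g * S ^ Suc n
      \<le> (S + g) * (S ^ Suc n + real (Suc n) * g * S ^ n)"
    using Suc.prems by (simp add: algebra_simps)
  also have "\<dots> \<le> (S + g) * (S + g) ^ Suc n"
    using Suc by (intro mult_left_mono) auto
  finally show ?case by simp
qed

lemma EE_bound:
  assumes "finite B" "\<forall>p\<in>B. 0 \<le> g p"
  shows "EE m g B \<le> (\<Sum>p\<in>B. g p) ^ m / fact m"
  using assms
proof (induction B arbitrary: m rule: finite_induct)
  case empty
  then show ?case by (cases m) (auto simp: EE_empty)
next
  case (insert q B)
  have hB: "\<forall>p\<in>B. 0 \<le> g p" and gq: "0 \<le> g q" using insert.prems by auto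
  define S where "S = (\<Sum>p\<in>B. g p)"
  have S0: "0 \<le> S" unfolding S_def using hB by (auto intro: sum_nonneg)
  have sins: "(\<Sum>p\<in>insert q B. g p) = S + g q" unfolding S_def using insert.hyps by simp
  show ?case
  proof (cases m)
    case 0 then show ?thesis using EE_0 insert.hyps by simp
  next
    case (Suc n)
    have "EE (Suc n) g (insert q B) = EE (Suc n) g B + g q * EE n g B"
      using EE_insert[OF insert.hyps(1,2)] by simp
    also have "\<dots> \<le> S ^ Suc n / fact (Suc n) + g q * (S ^ n / fact n)"
      using insert.IH[OF hB, of "Suc n"] insert.IH[OF hB, of n] gq unfolding S_def
      by (intro add_mono mult_left_mono) auto
    also have "\<dots> = (S ^ Suc n + real (Suc n) * g q * S ^ n) / fact (Suc n)"
    proof -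
      have f: "(fact (Suc n)::real) = real (Suc n) * fact n" by simp
      have fp: "(fact n :: real) > 0" by simp
      show ?thesis unfolding f using fp by (simp add: field_simps del: of_nat_Suc)
    qed
    also have "\<dots> \<le> (S + g q) ^ Suc n / fact (Suc n)"
      by (intro divide_right_mono pow_lower S0 gq) simp
    finally show ?thesis unfolding Suc sins .
  qed
qed

definition CT :: "nat \<Rightarrow> nat set \<Rightarrow> real" where
  "CT k B = (\<Sum>D\<in>Pow B. if card D \<le> k then 1 else 0)"

lemma CT_bound:
  assumes "finite B"
  shows "CT k B \<le> (real (card B) + 1) ^ k"
  using assms
proof (induction B arbitrary: k rule: finite_induct)
  case empty
  then show ?case by (simp add: CT_def)
next
  case (insert q B)
  have rec: "CT k (insert q B) = CT k B + (\<Sum>D\<in>Pow B. if card (insert q D) \<le> k then 1 else 0)"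
    unfolding CT_def by (rule sum_Pow_insert[OF insert.hyps])
  have cB: "real (card (insert q B)) + 1 = (real (card B) + 1) + 1" using insert.hyps by simp
  show ?case
  proof (cases k)
    case 0
    have "(\<Sum>D\<in>Pow B. if card (insert q D) \<le> k then 1 else 0) = (0::real)"
      using 0 insert.hyps by (intro sum.neutral) (auto dest: finite_subset simp: card_gt_0_iff)
    moreover have "CT 0 B = 1"
    proof -
      have "CT 0 B = (\<Sum>D\<in>Pow B. if D = {} then 1 else 0)"
        unfolding CT_def by (rule sum.cong) (use insert.hyps in \<open>auto dest: finite_subset\<close>)
      also have "\<dots> = 1" using insert.hyps by (simp add: sum.delta)
      finally show ?thesis .
    qed
    ultimately show ?thesis using rec 0 by simp
  next
    case (Suc j)
    have "(\<Sum>D\<in>Pow B. if card (insert q D) \<le> k then 1 else 0) = CT j B"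
      unfolding CT_def Suc
    proof (rule sum.cong)
      fix D assume "D \<in> Pow B"
      then have "finite D" "q \<notin> D" using insert.hyps by (auto dest: finite_subset)
      then show "(if card (insert q D) \<le> Suc j then 1 else 0) = (if card D \<le> j then 1 else (0::real))"
        by simp
    qed simp
    then have "CT k (insert q B) = CT (Suc j) B + CT j B" using rec Suc by simp
    also have "\<dots> \<le> (real (card B) + 1) ^ Suc j + (real (card B) + 1) ^ j"
      using insert.IH[of "Suc j"] insert.IH[of j] by (rule add_mono)
    also have "\<dots> \<le> (real (card B) + 1) ^ Suc j + real (Suc j) * 1 * (real (card B) + 1) ^ j"
      by (intro add_left_mono) (auto intro!: mult_right_mono)
    also have "\<dots> \<le> ((real (card B) + 1) + 1) ^ Suc j"
      by (rule pow_lower) auto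
    finally show ?thesis using cB Suc by simp
  qed
qed

lemma abs_hT_sum: "(\<Sum>D\<in>Pow B. \<bar>hT k D\<bar>) = CT k B"
  unfolding CT_def hT_def by (rule sum.cong) auto

lemma abs_hE_sum: "finite B \<Longrightarrow> (\<Sum>D\<in>Pow B. \<bar>hE k D\<bar>) \<le> CT k B"
  unfolding CT_def hE_def by (rule sum_mono) auto

lemma expand:
  fixes h :: "nat \<Rightarrow> nat set \<Rightarrow> real" and g :: "nat \<Rightarrow> real"
  assumes fin: "\<forall>j<M. finite (B j)" and disj: "\<forall>i<M. \<forall>j<M. i \<noteq> j \<longrightarrow> B i \<inter> B j = {}"
  shows "(\<Prod>j<M. \<Sum>D\<in>Pow (B j). h j D * (\<Prod>p\<in>D. g p))
       = (\<Sum>Ds\<in>PiE {..<M} (\<lambda>j. Pow (B j)). (\<Prod>j<M. h j (Ds j)) * (\<Prod>p\<in>(\<Union>j<M. Ds j). g p))"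
proof -
  have "(\<Prod>j<M. \<Sum>D\<in>Pow (B j). h j D * (\<Prod>p\<in>D. g p))
      = (\<Sum>Ds\<in>PiE {..<M} (\<lambda>j. Pow (B j)). \<Prod>j<M. h j (Ds j) * (\<Prod>p\<in>Ds j. g p))"
    by (rule prod_sum_PiE) (use fin in auto)
  also have "\<dots> = (\<Sum>Ds\<in>PiE {..<M} (\<lambda>j. Pow (B j)). (\<Prod>j<M. h j (Ds j)) * (\<Prod>p\<in>(\<Union>j<M. Ds j). g p))"
  proof (rule sum.cong)
    fix Ds assume Ds: "Ds \<in> PiE {..<M} (\<lambda>j. Pow (B j))"
    have "(\<Prod>p\<in>(\<Union>j<M. Ds j). g p) = (\<Prod>j<M. \<Prod>p\<in>Ds j. g p)"
    proof (rule prod.UNION_disjoint)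
      show "\<forall>i\<in>{..<M}. finite (Ds i)" using Ds fin by (auto simp: PiE_def Pi_def dest: finite_subset)
      show "\<forall>i\<in>{..<M}. \<forall>j\<in>{..<M}. i \<noteq> j \<longrightarrow> Ds i \<inter> Ds j = {}"
        using Ds disj by (auto simp: PiE_def Pi_def) blast
    qed simp
    then show "(\<Prod>j<M. h j (Ds j) * (\<Prod>p\<in>Ds j. g p)) = (\<Prod>j<M. h j (Ds j)) * (\<Prod>p\<in>(\<Union>j<M. Ds j). g p)"
      by (simp add: prod.distrib)
  qed simp
  finally show ?thesis .
qed

definition ind :: "int \<Rightarrow> nat \<Rightarrow> real" where
  "ind n p = (if int p dvd n then 1 else 0)"

definition Iv :: "real \<Rightarrow> real \<Rightarrow> int set" where
  "Iv x y = {n::int. x < real_of_int n \<and> real_of_int n \<le> x + y}"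

lemma finite_Iv: "finite (Iv x y)"
proof -
  have "Iv x y \<subseteq> {\<lfloor>x\<rfloor> .. \<lceil>x + y\<rceil>}"
  proof
    fix n assume "n \<in> Iv x y"
    then have "x \<le> real_of_int n" "real_of_int n \<le> x + y" unfolding Iv_def by auto
    then have "\<lfloor>x\<rfloor> \<le> n" "n \<le> \<lceil>x + y\<rceil>"
      by (simp_all add: floor_le_iff le_ceiling_iff)
    then show "n \<in> {\<lfloor>x\<rfloor> .. \<lceil>x + y\<rceil>}" by simp
  qed
  then show ?thesis by (rule finite_subset) simp
qed

lemma prod_ind: "finite U \<Longrightarrow> (\<Prod>p\<in>U. ind n p) = (if \<forall>p\<in>U. int p dvd n then 1 else 0)"
  unfolding ind_def by (auto simp: prod.neutral)

lemma card_int_interval: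
  assumes "a \<le> b"
  shows "card {k::int. a < real_of_int k \<and> real_of_int k \<le> b} = nat (\<lfloor>b\<rfloor> - \<lfloor>a\<rfloor>)"
proof -
  have "{k::int. a < real_of_int k \<and> real_of_int k \<le> b} = {\<lfloor>a\<rfloor> + 1 .. \<lfloor>b\<rfloor>}"
  proof (intro set_eqI iffI)
    fix k assume "k \<in> {k::int. a < real_of_int k \<and> real_of_int k \<le> b}"
    then have "\<lfloor>a\<rfloor> < k" "k \<le> \<lfloor>b\<rfloor>" by (simp_all add: floor_less_iff le_floor_iff)
    then show "k \<in> {\<lfloor>a\<rfloor> + 1 .. \<lfloor>b\<rfloor>}" by simp
  next
    fix k assume "k \<in> {\<lfloor>a\<rfloor> + 1 .. \<lfloor>b\<rfloor>}"
    then have "\<lfloor>a\<rfloor> < k" "k \<le> \<lfloor>b\<rfloor>" by simp_all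
    then show "k \<in> {k::int. a < real_of_int k \<and> real_of_int k \<le> b}" by (simp add: floor_less_iff le_floor_iff)
  qed
  then show ?thesis by simp
qed

lemma card_multiples:
  fixes m :: int
  assumes m: "m > 0" and y: "y \<ge> 0"
  shows "\<bar>real (card {n\<in>Iv x y. m dvd n}) - y / m\<bar> \<le> 1"
proof -
  have eq: "{n\<in>Iv x y. m dvd n} = (\<lambda>k. m * k) ` {k::int. x / m < real_of_int k \<and> real_of_int k \<le> (x + y) / m}"
  proof (intro equalityI subsetI)
    fix n assume "n \<in> {n\<in>Iv x y. m dvd n}"
    then have xn: "x < real_of_int n" "real_of_int n \<le> x + y" "m dvd n" unfolding Iv_def by auto
    then obtain k where n: "n = m * k" by (auto elim: dvdE)
    then have xk: "x < m * k" "m * k \<le> x + y" using xn by auto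
    then have "x / m < k" "k \<le> (x + y) / m" using m by (auto simp: field_simps)
    then show "n \<in> (\<lambda>k. m * k) ` {k::int. x / m < real_of_int k \<and> real_of_int k \<le> (x + y) / m}"
      using n by auto
  next
    fix n assume "n \<in> (\<lambda>k. m * k) ` {k::int. x / m < real_of_int k \<and> real_of_int k \<le> (x + y) / m}"
    then obtain k where n: "n = m * k" and "x / m < k" "k \<le> (x + y) / m" by auto
    then have "x < m * k" "m * k \<le> x + y" using m by (auto simp: field_simps)
    then show "n \<in> {n\<in>Iv x y. m dvd n}" using n unfolding Iv_def by auto
  qed
  have inj: "inj_on (\<lambda>k. m * k) S" for S using m by (auto simp: inj_on_def)
  have ab: "x / m \<le> (x + y) / m" using m y by (intro divide_right_mono) auto
  have "card {n\<in>Iv x y. m dvd n} = nat (\<lfloor>(x + y) / m\<rfloor> - \<lfloor>x / m\<rfloor>)"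
    unfolding eq card_image[OF inj] by (rule card_int_interval[OF ab])
  moreover have "\<lfloor>x / m\<rfloor> \<le> \<lfloor>(x + y) / m\<rfloor>" using ab by (rule floor_mono)
  ultimately have c: "real (card {n\<in>Iv x y. m dvd n}) = of_int \<lfloor>(x + y) / m\<rfloor> - of_int \<lfloor>x / m\<rfloor>"
    by simp
  have "(x + y) / m - x / m = y / m" by (simp add: diff_divide_distrib[symmetric])
  then show ?thesis unfolding c
    using floor_correct[of "(x+y)/m"] floor_correct[of "x/m"] by (simp add: abs_le_iff) linarith
qed

lemma primes_dvd_iff:
  assumes "finite U" "\<forall>p\<in>U. prime p"
  shows "(\<forall>p\<in>U. int p dvd n) \<longleftrightarrow> int (\<Prod>U) dvd n"
  using assms
proof (induction U rule: finite_induct)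
  case empty then show ?case by simp
next
  case (insert q U)
  have pq: "prime (int q)" using insert.prems by simp
  have "\<not> int q dvd int (\<Prod>U)"
  proof
    assume "int q dvd int (\<Prod>U)"
    then have "q dvd \<Prod>U" using int_dvd_int_iff by blast
    then obtain p where "p \<in> U" "q dvd p" using prime_dvd_prod_iff[OF insert.hyps(1), of q "\<lambda>p. p"] insert.prems by auto
    then have "q = p" using insert.prems primes_dvd_imp_eq[of q p] by auto
    then show False using \<open>p \<in> U\<close> insert.hyps by simp
  qed
  then have cop: "coprime (int q) (int (\<Prod>U))" using pq prime_imp_coprime by blast
  have "int (\<Prod>(insert q U)) = int q * int (\<Prod>U)" using insert.hyps by simp
  then show ?case using insert cop
    by (auto intro: divides_mult dest: dvd_mult_left dvd_mult_right)
qed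

lemma count_U:
  assumes "finite U" "\<forall>p\<in>U. prime p" "y \<ge> 0"
  shows "\<bar>(\<Sum>n\<in>Iv x y. \<Prod>p\<in>U. ind n p) - y * (\<Prod>p\<in>U. 1 / real p)\<bar> \<le> 1"
proof -
  have "(\<Sum>n\<in>Iv x y. \<Prod>p\<in>U. ind n p) = (\<Sum>n\<in>Iv x y. if int (\<Prod>U) dvd n then 1 else 0)"
    using primes_dvd_iff[OF assms(1,2)] prod_ind[OF assms(1)] by simp
  also have "\<dots> = real (card {n\<in>Iv x y. int (\<Prod>U) dvd n})"
  proof -
    have "Iv x y \<inter> {n. int (\<Prod>U) dvd n} = {n\<in>Iv x y. int (\<Prod>U) dvd n}" by auto
    then show ?thesis using finite_Iv[of x y] by (simp add: sum.If_cases)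
  qed
  finally have e1: "(\<Sum>n\<in>Iv x y. \<Prod>p\<in>U. ind n p) = real (card {n\<in>Iv x y. int (\<Prod>U) dvd n})" .
  have pos: "int (\<Prod>U) > 0" using assms(2) prime_gt_0_nat by (simp add: prod_pos)
  have e2: "y * (\<Prod>p\<in>U. 1 / real p) = y / real_of_int (int (\<Prod>U))"
    by (simp add: prod_dividef)
  show ?thesis unfolding e1 e2 using card_multiples[OF pos assms(3)] by simp
qed

lemma count_main:
  fixes h :: "nat \<Rightarrow> nat set \<Rightarrow> real"
  assumes fin: "\<forall>j<M. finite (B j)" and disj: "\<forall>i<M. \<forall>j<M. i \<noteq> j \<longrightarrow> B i \<inter> B j = {}"
    and pr: "\<forall>j<M. \<forall>p\<in>B j. prime p" and y: "y \<ge> 0"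
  shows "\<bar>(\<Sum>n\<in>Iv x y. \<Prod>j<M. \<Sum>D\<in>Pow (B j). h j D * (\<Prod>p\<in>D. ind n p))
          - y * (\<Prod>j<M. \<Sum>D\<in>Pow (B j). h j D * (\<Prod>p\<in>D. 1 / real p))\<bar>
         \<le> (\<Prod>j<M. \<Sum>D\<in>Pow (B j). \<bar>h j D\<bar>)"
proof -
  define PS where "PS = PiE {..<M} (\<lambda>j. Pow (B j))"
  define c where "c Ds = (\<Prod>j<M. h j (Ds j))" for Ds
  define U where "U Ds = (\<Union>j<M. Ds j)" for Ds :: "nat \<Rightarrow> nat set"
  have finPS: "finite PS" unfolding PS_def using fin by (intro finite_PiE) auto
  have Uprop: "finite (U Ds) \<and> (\<forall>p\<in>U Ds. prime p)" if "Ds \<in> PS" for Ds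
  proof -
    have sub: "Ds j \<subseteq> B j" if "j < M" for j using \<open>Ds \<in> PS\<close> that unfolding PS_def by auto
    have "finite (Ds j)" if "j < M" for j using sub[OF that] fin that finite_subset by blast
    then have "finite (U Ds)" unfolding U_def by auto
    moreover have "\<forall>p\<in>U Ds. prime p" unfolding U_def using sub pr by blast
    ultimately show ?thesis by blast
  qed
  have e1: "(\<Sum>n\<in>Iv x y. \<Prod>j<M. \<Sum>D\<in>Pow (B j). h j D * (\<Prod>p\<in>D. ind n p))
      = (\<Sum>Ds\<in>PS. c Ds * (\<Sum>n\<in>Iv x y. \<Prod>p\<in>U Ds. ind n p))"
  proof -
    have "(\<Sum>n\<in>Iv x y. \<Prod>j<M. \<Sum>D\<in>Pow (B j). h j D * (\<Prod>p\<in>D. ind n p))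
        = (\<Sum>n\<in>Iv x y. \<Sum>Ds\<in>PS. c Ds * (\<Prod>p\<in>U Ds. ind n p))"
      unfolding PS_def c_def U_def by (intro sum.cong refl expand[OF fin disj])
    also have "\<dots> = (\<Sum>Ds\<in>PS. \<Sum>n\<in>Iv x y. c Ds * (\<Prod>p\<in>U Ds. ind n p))"
      by (rule sum.swap)
    also have "\<dots> = (\<Sum>Ds\<in>PS. c Ds * (\<Sum>n\<in>Iv x y. \<Prod>p\<in>U Ds. ind n p))"
      by (simp add: sum_distrib_left)
    finally show ?thesis .
  qed
  have e2: "y * (\<Prod>j<M. \<Sum>D\<in>Pow (B j). h j D * (\<Prod>p\<in>D. 1 / real p))
      = (\<Sum>Ds\<in>PS. c Ds * (y * (\<Prod>p\<in>U Ds. 1 / real p)))"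
    unfolding PS_def c_def U_def expand[OF fin disj] by (simp add: sum_distrib_left algebra_simps)
  have e3: "(\<Prod>j<M. \<Sum>D\<in>Pow (B j). \<bar>h j D\<bar>) = (\<Sum>Ds\<in>PS. \<bar>c Ds\<bar>)"
    using expand[OF fin disj, of "\<lambda>j D. \<bar>h j D\<bar>" "\<lambda>_. 1"]
    unfolding PS_def c_def by (simp add: abs_prod)
  have "\<bar>(\<Sum>Ds\<in>PS. c Ds * (\<Sum>n\<in>Iv x y. \<Prod>p\<in>U Ds. ind n p)) - (\<Sum>Ds\<in>PS. c Ds * (y * (\<Prod>p\<in>U Ds. 1 / real p)))\<bar>
      = \<bar>\<Sum>Ds\<in>PS. c Ds * ((\<Sum>n\<in>Iv x y. \<Prod>p\<in>U Ds. ind n p) - y * (\<Prod>p\<in>U Ds. 1 / real p))\<bar>"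
    by (simp add: sum_subtractf right_diff_distrib)
  also have "\<dots> \<le> (\<Sum>Ds\<in>PS. \<bar>c Ds * ((\<Sum>n\<in>Iv x y. \<Prod>p\<in>U Ds. ind n p) - y * (\<Prod>p\<in>U Ds. 1 / real p))\<bar>)"
    by (rule sum_abs)
  also have "\<dots> \<le> (\<Sum>Ds\<in>PS. \<bar>c Ds\<bar>)"
  proof (rule sum_mono)
    fix Ds assume "Ds \<in> PS"
    then have "\<bar>(\<Sum>n\<in>Iv x y. \<Prod>p\<in>U Ds. ind n p) - y * (\<Prod>p\<in>U Ds. 1 / real p)\<bar> \<le> 1"
      using Uprop y by (intro count_U) auto
    then show "\<bar>c Ds * ((\<Sum>n\<in>Iv x y. \<Prod>p\<in>U Ds. ind n p) - y * (\<Prod>p\<in>U Ds. 1 / real p))\<bar> \<le> \<bar>c Ds\<bar>"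
      unfolding abs_mult by (simp add: mult_left_le)
  qed
  finally show ?thesis unfolding e1 e2 e3 .
qed

lemma prod_diff_le:
  fixes a c e :: "nat \<Rightarrow> real"
  assumes "finite I" "\<forall>j\<in>I. 0 \<le> a j \<and> a j \<le> c j \<and> c j - a j \<le> e j"
  shows "(\<Prod>j\<in>I. c j) - (\<Prod>j\<in>I. a j) \<le> (\<Sum>i\<in>I. e i * (\<Prod>j\<in>I - {i}. c j))"
  using assms
proof (induction I rule: finite_induct)
  case empty then show ?case by simp
next
  case (insert i0 I)
  have h0: "0 \<le> a i0" "a i0 \<le> c i0" "c i0 - a i0 \<le> e i0" using insert.prems by auto
  have hI: "\<forall>j\<in>I. 0 \<le> a j \<and> a j \<le> c j \<and> c j - a j \<le> e j" using insert.prems by auto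
  have pa: "0 \<le> (\<Prod>j\<in>I. a j)" using hI by (auto intro: prod_nonneg)
  have pac: "(\<Prod>j\<in>I. a j) \<le> (\<Prod>j\<in>I. c j)" using hI by (auto intro: prod_mono)
  have IH: "(\<Prod>j\<in>I. c j) - (\<Prod>j\<in>I. a j) \<le> (\<Sum>i\<in>I. e i * (\<Prod>j\<in>I - {i}. c j))"
    using insert.IH[OF hI] .
  have L: "(\<Prod>j\<in>insert i0 I. c j) - (\<Prod>j\<in>insert i0 I. a j)
      = c i0 * ((\<Prod>j\<in>I. c j) - (\<Prod>j\<in>I. a j)) + (c i0 - a i0) * (\<Prod>j\<in>I. a j)"
    using insert.hyps by (simp add: algebra_simps)
  have R: "(\<Sum>i\<in>insert i0 I. e i * (\<Prod>j\<in>insert i0 I - {i}. c j))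
      = e i0 * (\<Prod>j\<in>I. c j) + c i0 * (\<Sum>i\<in>I. e i * (\<Prod>j\<in>I - {i}. c j))"
  proof -
    have "(\<Sum>i\<in>insert i0 I. e i * (\<Prod>j\<in>insert i0 I - {i}. c j))
        = e i0 * (\<Prod>j\<in>insert i0 I - {i0}. c j) + (\<Sum>i\<in>I. e i * (\<Prod>j\<in>insert i0 I - {i}. c j))"
      using insert.hyps by simp
    also have "(\<Prod>j\<in>insert i0 I - {i0}. c j) = (\<Prod>j\<in>I. c j)"
      using insert.hyps by (intro prod.cong) auto
    also have "(\<Sum>i\<in>I. e i * (\<Prod>j\<in>insert i0 I - {i}. c j)) = (\<Sum>i\<in>I. c i0 * (e i * (\<Prod>j\<in>I - {i}. c j)))"
    proof (rule sum.cong)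
      fix i assume "i \<in> I"
      then have "insert i0 I - {i} = insert i0 (I - {i})" using insert.hyps by auto
      then show "e i * (\<Prod>j\<in>insert i0 I - {i}. c j) = c i0 * (e i * (\<Prod>j\<in>I - {i}. c j))"
        using insert.hyps by simp
    qed simp
    finally show ?thesis by (simp add: sum_distrib_left)
  qed
  have c0: "0 \<le> c i0" using h0 by linarith
  have "c i0 * ((\<Prod>j\<in>I. c j) - (\<Prod>j\<in>I. a j)) \<le> c i0 * (\<Sum>i\<in>I. e i * (\<Prod>j\<in>I - {i}. c j))"
    using IH c0 by (rule mult_left_mono)
  moreover have "(c i0 - a i0) * (\<Prod>j\<in>I. a j) \<le> e i0 * (\<Prod>j\<in>I. c j)"
    using h0 pa pac by (intro mult_mono) auto
  ultimately show ?case unfolding L R by linarith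
qed

lemma ind_bounds: "\<forall>p\<in>B. 0 \<le> ind n p \<and> ind n p \<le> 1"
  by (simp add: ind_def)

lemma bonf_even:
  assumes "finite B" "\<forall>p\<in>B. 0 \<le> g p \<and> g p \<le> 1" "even k"
  shows "WW g B \<le> TT k g B" "TT k g B - WW g B \<le> EE (Suc k) g B"
  using bonferroni[OF assms(1,2), of k] assms(3) by auto

lemma CT_pow:
  assumes "finite B"
  shows "CT k B \<le> (real (card B) + 1) ^ Suc k" "CT (Suc k) B \<le> (real (card B) + 1) ^ Suc k"
proof -
  have "(real (card B) + 1) ^ k \<le> (real (card B) + 1) ^ Suc k"
    by (rule power_increasing) auto
  then show "CT k B \<le> (real (card B) + 1) ^ Suc k" using CT_bound[OF assms, of k] by linarith
  show "CT (Suc k) B \<le> (real (card B) + 1) ^ Suc k" using CT_bound[OF assms] .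
qed

lemma sieve_upper:
  fixes M :: nat and B :: "nat \<Rightarrow> nat set" and k :: "nat \<Rightarrow> nat" and x y :: real
  assumes fin: "\<forall>j<M. finite (B j)" and disj: "\<forall>i<M. \<forall>j<M. i \<noteq> j \<longrightarrow> B i \<inter> B j = {}"
    and pr: "\<forall>j<M. \<forall>p\<in>B j. prime p" and y: "y \<ge> 0" and ev: "\<forall>j<M. even (k j)"
  shows "(\<Sum>n\<in>Iv x y. \<Prod>j<M. WW (ind n) (B j))
     \<le> y * (\<Prod>j<M. TT (k j) (\<lambda>p. 1 / real p) (B j)) + (\<Prod>j<M. (real (card (B j)) + 1) ^ Suc (k j))"
proof -
  have "(\<Sum>n\<in>Iv x y. \<Prod>j<M. WW (ind n) (B j)) \<le> (\<Sum>n\<in>Iv x y. \<Prod>j<M. TT (k j) (ind n) (B j))"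
  proof (intro sum_mono prod_mono conjI)
    fix n j assume "j \<in> {..<M}"
    then show "0 \<le> WW (ind n) (B j)" "WW (ind n) (B j) \<le> TT (k j) (ind n) (B j)"
      using WW_bounds[OF ind_bounds] bonf_even[OF _ ind_bounds] fin ev by auto
  qed
  also have "\<dots> \<le> y * (\<Prod>j<M. TT (k j) (\<lambda>p. 1 / real p) (B j)) + (\<Prod>j<M. \<Sum>D\<in>Pow (B j). \<bar>hT (k j) D\<bar>)"
    using count_main[OF fin disj pr y, where h="\<lambda>j. hT (k j)" and x=x] unfolding TT_def by linarith
  also have "(\<Prod>j<M. \<Sum>D\<in>Pow (B j). \<bar>hT (k j) D\<bar>) \<le> (\<Prod>j<M. (real (card (B j)) + 1) ^ Suc (k j))"
    unfolding abs_hT_sum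
    by (intro prod_mono conjI) (use fin CT_pow in \<open>auto simp: CT_def intro!: sum_nonneg\<close>)
  finally show ?thesis by simp
qed

lemma sieve_lower:
  fixes M :: nat and B :: "nat \<Rightarrow> nat set" and k :: "nat \<Rightarrow> nat" and x y :: real
  assumes fin: "\<forall>j<M. finite (B j)" and disj: "\<forall>i<M. \<forall>j<M. i \<noteq> j \<longrightarrow> B i \<inter> B j = {}"
    and pr: "\<forall>j<M. \<forall>p\<in>B j. prime p" and y: "y \<ge> 0" and ev: "\<forall>j<M. even (k j)"
  shows "(\<Sum>n\<in>Iv x y. \<Prod>j<M. WW (ind n) (B j))
     \<ge> y * (\<Prod>j<M. TT (k j) (\<lambda>p. 1 / real p) (B j))
       - y * (\<Sum>i<M. EE (Suc (k i)) (\<lambda>p. 1 / real p) (B i) * (\<Prod>j\<in>{..<M} - {i}. TT (k j) (\<lambda>p. 1 / real p) (B j)))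
       - real (Suc M) * (\<Prod>j<M. (real (card (B j)) + 1) ^ Suc (k j))"
proof -
  define g where "g = (\<lambda>p. 1 / real p)"
  define Rb where "Rb = (\<Prod>j<M. (real (card (B j)) + 1) ^ Suc (k j))"
  define hh where "hh i j = (if j = i then hE (Suc (k i)) else hT (k j))" for i j
  have pw: "(\<Prod>j<M. WW (ind n) (B j)) \<ge> (\<Prod>j<M. TT (k j) (ind n) (B j))
      - (\<Sum>i<M. EE (Suc (k i)) (ind n) (B i) * (\<Prod>j\<in>{..<M} - {i}. TT (k j) (ind n) (B j)))" for n
    using prod_diff_le[of "{..<M}" "\<lambda>j. WW (ind n) (B j)" "\<lambda>j. TT (k j) (ind n) (B j)" "\<lambda>j. EE (Suc (k j)) (ind n) (B j)"]
      WW_bounds[OF ind_bounds] bonf_even[OF _ ind_bounds] fin ev by auto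
  have Rb_ge: "(\<Prod>j<M. \<Sum>D\<in>Pow (B j). \<bar>hh i j D\<bar>) \<le> Rb" for i
    unfolding Rb_def hh_def
  proof (intro prod_mono conjI)
    fix j assume j: "j \<in> {..<M}"
    show "0 \<le> (\<Sum>D\<in>Pow (B j). \<bar>(if j = i then hE (Suc (k i)) else hT (k j)) D\<bar>)"
      by (intro sum_nonneg) auto
    show "(\<Sum>D\<in>Pow (B j). \<bar>(if j = i then hE (Suc (k i)) else hT (k j)) D\<bar>) \<le> (real (card (B j)) + 1) ^ Suc (k j)"
    proof (cases "j = i")
      case True
      then show ?thesis using abs_hE_sum[where B="B j" and k="Suc (k j)"] CT_pow(2)[where B="B j" and k="k j"] fin j by auto
    next
      case False
      then show ?thesis using abs_hT_sum[where B="B j" and k="k j"] CT_pow(1)[where B="B j" and k="k j"] fin j by auto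
    qed
  qed
  have split: "(\<Prod>j<M. \<Sum>D\<in>Pow (B j). hh i j D * (\<Prod>p\<in>D. f p))
      = EE (Suc (k i)) f (B i) * (\<Prod>j\<in>{..<M} - {i}. TT (k j) f (B j))" if "i < M" for i f
  proof -
    have "(\<Prod>j<M. \<Sum>D\<in>Pow (B j). hh i j D * (\<Prod>p\<in>D. f p))
        = (\<Prod>j<M. if j = i then EE (Suc (k i)) f (B i) else TT (k j) f (B j))"
      unfolding hh_def EE_def TT_def by (intro prod.cong) auto
    also have "\<dots> = EE (Suc (k i)) f (B i) * (\<Prod>j\<in>{..<M} - {i}. if j = i then EE (Suc (k i)) f (B i) else TT (k j) f (B j))"
      using that by (subst prod.remove[of _ i]) auto
    also have "(\<Prod>j\<in>{..<M} - {i}. if j = i then EE (Suc (k i)) f (B i) else TT (k j) f (B j)) = (\<Prod>j\<in>{..<M} - {i}. TT (k j) f (B j))"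
      by (intro prod.cong) auto
    finally show ?thesis .
  qed
  have main: "(\<Sum>n\<in>Iv x y. \<Prod>j<M. TT (k j) (ind n) (B j)) \<ge> y * (\<Prod>j<M. TT (k j) g (B j)) - Rb"
  proof -
    have "(\<Prod>j<M. \<Sum>D\<in>Pow (B j). \<bar>hT (k j) D\<bar>) \<le> Rb"
      unfolding abs_hT_sum Rb_def
      by (intro prod_mono conjI) (use fin CT_pow in \<open>auto simp: CT_def intro!: sum_nonneg\<close>)
    then show ?thesis
      using count_main[OF fin disj pr y, where h="\<lambda>j. hT (k j)" and x=x] unfolding TT_def g_def by linarith
  qed
  have each: "(\<Sum>n\<in>Iv x y. EE (Suc (k i)) (ind n) (B i) * (\<Prod>j\<in>{..<M} - {i}. TT (k j) (ind n) (B j)))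
      \<le> y * (EE (Suc (k i)) g (B i) * (\<Prod>j\<in>{..<M} - {i}. TT (k j) g (B j))) + Rb" if "i < M" for i
    using count_main[OF fin disj pr y, where h="hh i" and x=x] split[OF that] Rb_ge[of i]
    unfolding g_def by (simp add: abs_le_iff)
  have "(\<Sum>n\<in>Iv x y. \<Prod>j<M. WW (ind n) (B j))
      \<ge> (\<Sum>n\<in>Iv x y. (\<Prod>j<M. TT (k j) (ind n) (B j))
          - (\<Sum>i<M. EE (Suc (k i)) (ind n) (B i) * (\<Prod>j\<in>{..<M} - {i}. TT (k j) (ind n) (B j))))"
    using pw by (intro sum_mono) auto
  also have "(\<Sum>n\<in>Iv x y. (\<Prod>j<M. TT (k j) (ind n) (B j))
          - (\<Sum>i<M. EE (Suc (k i)) (ind n) (B i) * (\<Prod>j\<in>{..<M} - {i}. TT (k j) (ind n) (B j))))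
     = (\<Sum>n\<in>Iv x y. \<Prod>j<M. TT (k j) (ind n) (B j))
       - (\<Sum>i<M. \<Sum>n\<in>Iv x y. EE (Suc (k i)) (ind n) (B i) * (\<Prod>j\<in>{..<M} - {i}. TT (k j) (ind n) (B j)))"
    by (simp add: sum_subtractf sum.swap[of _ "Iv x y"])
  finally have A: "(\<Sum>n\<in>Iv x y. \<Prod>j<M. WW (ind n) (B j)) \<ge> \<dots>" .
  have "(\<Sum>i<M. \<Sum>n\<in>Iv x y. EE (Suc (k i)) (ind n) (B i) * (\<Prod>j\<in>{..<M} - {i}. TT (k j) (ind n) (B j)))
      \<le> (\<Sum>i<M. y * (EE (Suc (k i)) g (B i) * (\<Prod>j\<in>{..<M} - {i}. TT (k j) g (B j))) + Rb)"
    using each by (intro sum_mono) auto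
  also have "\<dots> = y * (\<Sum>i<M. EE (Suc (k i)) g (B i) * (\<Prod>j\<in>{..<M} - {i}. TT (k j) g (B j))) + real M * Rb"
    by (simp add: sum.distrib sum_distrib_left)
  finally have Bd: "(\<Sum>i<M. \<Sum>n\<in>Iv x y. EE (Suc (k i)) (ind n) (B i) * (\<Prod>j\<in>{..<M} - {i}. TT (k j) (ind n) (B j)))
      \<le> y * (\<Sum>i<M. EE (Suc (k i)) g (B i) * (\<Prod>j\<in>{..<M} - {i}. TT (k j) g (B j))) + real M * Rb" .
  show ?thesis using A Bd main unfolding g_def[symmetric] Rb_def[symmetric] by (simp add: algebra_simps)
qed

lemma pow_fact_le_exp:
  fixes x :: real assumes "x \<ge> 0" shows "x ^ n / fact n \<le> exp x"
proof -
  have s: "(\<lambda>n. x^n /\<^sub>R fact n) sums exp x" by (rule exp_converges)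
  have "(\<Sum>i\<in>{n}. x^i /\<^sub>R fact i) \<le> (\<Sum>i. x^i /\<^sub>R fact i)"
    by (rule sum_le_suminf[OF sums_summable[OF s]]) (use assms in auto)
  also have "\<dots> = exp x" using s sums_unique by metis
  finally show ?thesis by (simp add: divide_inverse mult.commute)
qed

lemma rel_bounds:
  fixes W T E :: "nat \<Rightarrow> real"
  assumes fin: "finite I" and h: "\<forall>j\<in>I. 0 < W j \<and> W j \<le> T j \<and> T j \<le> W j + E j"
    and dl: "(\<Sum>j\<in>I. E j / W j) \<le> \<delta>"
  shows "(\<Prod>j\<in>I. T j) \<le> (\<Prod>j\<in>I. W j) * exp \<delta>"
    "(\<Prod>j\<in>I. W j) \<le> (\<Prod>j\<in>I. T j)"
    "(\<Sum>i\<in>I. E i * (\<Prod>j\<in>I - {i}. T j)) \<le> (\<Prod>j\<in>I. W j) * (\<delta> * exp \<delta>)"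
proof -
  define r where "r j = E j / W j" for j
  have r0: "0 \<le> r j" if "j \<in> I" for j using h that unfolding r_def by (auto intro: divide_nonneg_pos)
  have Tle: "T j \<le> W j * exp (r j)" if "j \<in> I" for j
  proof -
    have "T j \<le> W j * (1 + r j)" using h that unfolding r_def by (auto simp: field_simps)
    also have "\<dots> \<le> W j * exp (r j)" using h that by (intro mult_left_mono) (auto simp: add.commute)
    finally show ?thesis .
  qed
  have T0: "0 \<le> T j" if "j \<in> I" for j using h that by force
  have prodT: "(\<Prod>j\<in>J. T j) \<le> (\<Prod>j\<in>J. W j) * exp (\<Sum>j\<in>J. r j)" if "J \<subseteq> I" for J
  proof -
    have fJ: "finite J" using fin that finite_subset by blast
    have "(\<Prod>j\<in>J. T j) \<le> (\<Prod>j\<in>J. W j * exp (r j))"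
      using that T0 Tle by (intro prod_mono) auto
    also have "\<dots> = (\<Prod>j\<in>J. W j) * exp (\<Sum>j\<in>J. r j)"
      by (simp add: prod.distrib exp_sum[OF fJ])
    finally show ?thesis .
  qed
  have sr: "(\<Sum>j\<in>J. r j) \<le> \<delta>" if "J \<subseteq> I" for J
  proof -
    have "(\<Sum>j\<in>J. r j) \<le> (\<Sum>j\<in>I. r j)" using that r0 fin by (intro sum_mono2) auto
    then show ?thesis using dl unfolding r_def by simp
  qed
  have W0: "0 \<le> (\<Prod>j\<in>J. W j)" if "J \<subseteq> I" for J using that h by (intro prod_nonneg) force
  show "(\<Prod>j\<in>I. T j) \<le> (\<Prod>j\<in>I. W j) * exp \<delta>"
    using prodT[of I] sr[of I] W0[of I] by (meson exp_le_cancel_iff mult_left_mono order_trans order_refl)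
  show "(\<Prod>j\<in>I. W j) \<le> (\<Prod>j\<in>I. T j)" using h by (intro prod_mono) force
  have "(\<Sum>i\<in>I. E i * (\<Prod>j\<in>I - {i}. T j)) \<le> (\<Sum>i\<in>I. r i * ((\<Prod>j\<in>I. W j) * exp \<delta>))"
  proof (rule sum_mono)
    fix i assume i: "i \<in> I"
    have Ei: "E i = r i * W i" using h i unfolding r_def by auto
    have "(\<Prod>j\<in>I - {i}. T j) \<le> (\<Prod>j\<in>I - {i}. W j) * exp \<delta>"
      using prodT[of "I - {i}"] sr[of "I - {i}"] W0[of "I - {i}"]
      by (meson Diff_subset exp_le_cancel_iff mult_left_mono order_trans)
    then have "E i * (\<Prod>j\<in>I - {i}. T j) \<le> r i * W i * ((\<Prod>j\<in>I - {i}. W j) * exp \<delta>)"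
      unfolding Ei using r0[OF i] h i by (intro mult_left_mono) auto
    also have "r i * W i * ((\<Prod>j\<in>I - {i}. W j) * exp \<delta>) = r i * ((\<Prod>j\<in>I. W j) * exp \<delta>)"
      using prod.remove[OF fin i, of W] by simp
    finally show "E i * (\<Prod>j\<in>I - {i}. T j) \<le> r i * ((\<Prod>j\<in>I. W j) * exp \<delta>)" .
  qed
  also have "\<dots> = (\<Sum>i\<in>I. r i) * ((\<Prod>j\<in>I. W j) * exp \<delta>)" by (simp add: sum_distrib_right)
  also have "\<dots> \<le> \<delta> * ((\<Prod>j\<in>I. W j) * exp \<delta>)"
    using sr[of I] W0[of I] by (intro mult_right_mono) auto
  finally show "(\<Sum>i\<in>I. E i * (\<Prod>j\<in>I - {i}. T j)) \<le> (\<Prod>j\<in>I. W j) * (\<delta> * exp \<delta>)"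
    by (simp add: algebra_simps)
qed

lemma card_multiples_nat:
  assumes "p > 0"
  shows "card {m\<in>{1..n}. p dvd m} = n div p"
proof -
  have "{m\<in>{1..n}. p dvd m} = (\<lambda>k. p * k) ` {1..n div p}"
  proof (intro equalityI subsetI)
    fix m assume "m \<in> {m\<in>{1..n}. p dvd m}"
    then obtain k where m: "m = p * k" "1 \<le> m" "m \<le> n" by (auto elim: dvdE)
    then have "1 \<le> k" by (cases k) auto
    moreover have "k \<le> n div p"
    proof -
      have "k = (p * k) div p" using assms by simp
      also have "\<dots> \<le> n div p" using m by (intro div_le_mono) simp
      finally show ?thesis .
    qed
    ultimately show "m \<in> (\<lambda>k. p * k) ` {1..n div p}" using m by auto
  next
    fix m assume "m \<in> (\<lambda>k. p * k) ` {1..n div p}"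
    then obtain k where k: "k \<in> {1..n div p}" "m = p * k" by blast
    then have m: "m = p * k" "1 \<le> k" "k \<le> n div p" by auto
    have "p * k \<le> p * (n div p)" using m by simp
    also have "\<dots> \<le> n" by simp
    finally show "m \<in> {m\<in>{1..n}. p dvd m}" using m assms by auto
  qed
  moreover have "inj_on (\<lambda>k. p * k) {1..n div p}" using assms by (auto simp: inj_on_def)
  ultimately show ?thesis by (simp add: card_image)
qed

lemma div_ge_half:
  assumes "0 < p" "p \<le> n"
  shows "real n / (2 * real p) \<le> real (n div p)"
proof -
  have "p div p \<le> n div p" using assms(2) by (rule div_le_mono)
  then have q1: "n div p \<ge> 1" using assms(1) by simp
  have e: "n = p * (n div p) + n mod p" by simp
  have r: "n mod p < p" using assms by simp
  have "n < p * (n div p) + p" using e r by linarith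
  then have "real n < real p * real (n div p) + real p" by (metis of_nat_add of_nat_less_iff of_nat_mult)
  then have "real n < real p * (real (n div p) + 1)" by (simp add: distrib_left)
  also have "\<dots> \<le> real p * (2 * real (n div p))" using q1 assms by (intro mult_left_mono) auto
  finally show ?thesis using assms by (simp add: field_simps)
qed

lemma mertens_weak:
  assumes n: "n \<ge> 1"
  shows "(\<Sum>p\<in>{p. prime p \<and> p \<le> n}. ln (real p) / real p) \<le> 2 * ln (real n)"
proof -
  define P where "P = {p. prime p \<and> p \<le> n}"
  have finP: "finite P" unfolding P_def by (rule finite_subset[of _ "{..n}"]) auto
  define F where "F m = {p\<in>P. p dvd m}" for m
  have finF: "finite (F m)" for m unfolding F_def using finP by auto
  have lnF: "(\<Sum>p\<in>F m. ln (real p)) \<le> ln (real m)" if "m \<in> {1..n}" for m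
  proof -
    have prF: "\<forall>p\<in>F m. prime p" unfolding F_def P_def by auto
    have "\<forall>p\<in>F m. int p dvd int m" unfolding F_def by auto
    then have "int (\<Prod>(F m)) dvd int m" by (rule primes_dvd_iff[OF finF prF, THEN iffD1])
    then have "\<Prod>(F m) dvd m" by (rule int_dvd_int_iff[THEN iffD1])
    then have le: "\<Prod>(F m) \<le> m" using that by (intro dvd_imp_le) auto
    have pos: "\<forall>p\<in>F m. real p \<noteq> 0" using prF by (auto simp: prime_gt_0_nat)
    have "(\<Sum>p\<in>F m. ln (real p)) = ln (\<Prod>p\<in>F m. real p)"
      by (rule ln_prod[symmetric]) (use finF pos in auto)
    also have "\<dots> \<le> ln (real m)"
    proof (rule ln_mono)
      show "0 < (\<Prod>p\<in>F m. real p)" using prF by (intro prod_pos) (auto simp: prime_gt_0_nat)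
      have "(\<Prod>p\<in>F m. real p) = real (\<Prod>(F m))" by simp
      moreover have "real (\<Prod>(F m)) \<le> real m" using le by (simp only: of_nat_le_iff)
      ultimately show "(\<Prod>p\<in>F m. real p) \<le> real m" by linarith
    qed
    finally show ?thesis .
  qed
  have "(\<Sum>p\<in>P. ln (real p) / real p) * (real n / 2) = (\<Sum>p\<in>P. ln (real p) * (real n / (2 * real p)))"
    by (simp add: sum_distrib_right)
  also have "\<dots> \<le> (\<Sum>p\<in>P. ln (real p) * real (n div p))"
  proof (rule sum_mono)
    fix p assume "p \<in> P"
    then have p: "prime p" "p \<le> n" unfolding P_def by auto
    then have "0 < p" by (simp add: prime_gt_0_nat)
    moreover have "0 \<le> ln (real p)" using p prime_gt_1_nat[of p] by simp
    ultimately show "ln (real p) * (real n / (2 * real p)) \<le> ln (real p) * real (n div p)"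
      using p div_ge_half by (intro mult_left_mono) auto
  qed
  also have "\<dots> = (\<Sum>p\<in>P. \<Sum>m\<in>{1..n}. if p dvd m then ln (real p) else 0)"
  proof (rule sum.cong)
    fix p assume "p \<in> P"
    then have "0 < p" unfolding P_def by (simp add: prime_gt_0_nat)
    then show "ln (real p) * real (n div p) = (\<Sum>m\<in>{1..n}. if p dvd m then ln (real p) else 0)"
    proof -
      have "{1..n} \<inter> {m. p dvd m} = {m\<in>{1..n}. p dvd m}" by auto
      then show ?thesis using card_multiples_nat[of p n] \<open>0 < p\<close> by (simp add: sum.If_cases)
    qed
  qed simp
  also have "\<dots> = (\<Sum>m\<in>{1..n}. \<Sum>p\<in>P. if p dvd m then ln (real p) else 0)"
    by (rule sum.swap)
  also have "\<dots> = (\<Sum>m\<in>{1..n}. \<Sum>p\<in>F m. ln (real p))"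
  proof (rule sum.cong)
    fix m assume "m \<in> {1..n}"
    have "P \<inter> {p. p dvd m} = F m" unfolding F_def by auto
    then show "(\<Sum>p\<in>P. if p dvd m then ln (real p) else 0) = (\<Sum>p\<in>F m. ln (real p))"
      using finP by (simp add: sum.If_cases)
  qed simp
  also have "\<dots> \<le> (\<Sum>m\<in>{1..n}. ln (real n))"
  proof (rule sum_mono)
    fix m assume m: "m \<in> {1..n}"
    then have "ln (real m) \<le> ln (real n)" by auto
    then show "(\<Sum>p\<in>F m. ln (real p)) \<le> ln (real n)" using lnF[OF m] by linarith
  qed
  also have "\<dots> = real n * ln (real n)" by simp
  finally have "(\<Sum>p\<in>P. ln (real p) / real p) * (real n / 2) \<le> real n * ln (real n)" .
  then show ?thesis unfolding P_def[symmetric] using n by (simp add: field_simps)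
qed

lemma block_L:
  fixes t :: nat
  assumes t: "t \<ge> 2" and B: "B \<subseteq> {p. prime p \<and> t < p \<and> p \<le> t ^ 2}"
  shows "(\<Sum>p\<in>B. 1 / real p) \<le> 4"
proof -
  define P where "P = {p. prime p \<and> p \<le> t ^ 2}"
  have finP: "finite P" unfolding P_def by (rule finite_subset[of _ "{..t^2}"]) auto
  have BP: "B \<subseteq> P" using B unfolding P_def by auto
  have lt: "0 < ln (real t)" using t by simp
  have "(\<Sum>p\<in>B. 1 / real p) \<le> (\<Sum>p\<in>B. (ln (real p) / real p) / ln (real t))"
  proof (rule sum_mono)
    fix p assume "p \<in> B"
    then have p: "t < p" "prime p" using B by auto
    then have "ln (real t) \<le> ln (real p)" using t by simp
    then have "1 \<le> ln (real p) / ln (real t)" using lt by simp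
    then have "1 / real p \<le> (ln (real p) / ln (real t)) / real p"
      using p by (intro divide_right_mono) auto
    then show "1 / real p \<le> (ln (real p) / real p) / ln (real t)" by (simp add: field_simps)
  qed
  also have "\<dots> = (\<Sum>p\<in>B. ln (real p) / real p) / ln (real t)" by (simp add: sum_divide_distrib)
  also have "\<dots> \<le> (\<Sum>p\<in>P. ln (real p) / real p) / ln (real t)"
  proof (intro divide_right_mono sum_mono2[OF finP BP])
    fix p assume "p \<in> P - B"
    then have "prime p" unfolding P_def by auto
    then show "0 \<le> ln (real p) / real p" using prime_gt_1_nat[of p] by simp
  qed (use lt in auto)
  also have "\<dots> \<le> 2 * ln (real (t ^ 2)) / ln (real t)"
    unfolding P_def using mertens_weak[of "t^2"] t lt by (intro divide_right_mono) auto
  also have "\<dots> = 4" using lt by (simp add: ln_realpow)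
  finally show ?thesis .
qed

lemma one_minus_ge_exp: "0 \<le> x \<Longrightarrow> x \<le> 1/2 \<Longrightarrow> exp (-2 * x) \<le> 1 - (x::real)"
proof -
  assume x: "0 \<le> x" "x \<le> 1/2"
  have e: "(1 + 2 * x) * (1 - x) = 1 + x * (1 - 2 * x)" by (simp add: algebra_simps)
  have "0 \<le> x * (1 - 2 * x)" using x by (intro mult_nonneg_nonneg) auto
  then have "1 \<le> (1 + 2 * x) * (1 - x)" unfolding e by linarith
  also have "\<dots> \<le> exp (2 * x) * (1 - x)" using x by (intro mult_right_mono) (auto simp: add.commute)
  finally have "1 \<le> exp (2 * x) * (1 - x)" .
  then show ?thesis by (simp add: exp_minus field_simps)
qed

lemma block_est:
  assumes fin: "finite B" and pr: "\<forall>p\<in>B. prime p" and L: "(\<Sum>p\<in>B. 1 / real p) \<le> 4"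
  shows "0 < WW (\<lambda>p. 1 / real p) B"
    "EE (Suc k) (\<lambda>p. 1 / real p) B / WW (\<lambda>p. 1 / real p) B \<le> exp 16 / 2 ^ Suc k"
proof -
  define g where "g = (\<lambda>p. 1 / real p)"
  have g: "0 \<le> g p \<and> g p \<le> 1/2" if "p \<in> B" for p
    using pr that prime_ge_2_nat[of p] unfolding g_def by auto
  have "exp (-2 * (\<Sum>p\<in>B. g p)) = (\<Prod>p\<in>B. exp (-2 * g p))"
    using fin by (simp add: exp_sum[symmetric] sum_distrib_left)
  also have "\<dots> \<le> WW g B" unfolding WW_def
  proof (intro prod_mono conjI)
    fix p assume "p \<in> B"
    then have "0 \<le> g p" "g p \<le> 1/2" using g by auto
    then show "0 \<le> exp (-2 * g p)" "exp (-2 * g p) \<le> 1 - g p" using one_minus_ge_exp by auto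
  qed
  finally have Wlow: "exp (-2 * (\<Sum>p\<in>B. g p)) \<le> WW g B" .
  have "exp (-8) \<le> exp (-2 * (\<Sum>p\<in>B. g p))" using L unfolding g_def by simp
  then have W8: "exp (-8) \<le> WW g B" using Wlow by linarith
  then show "0 < WW (\<lambda>p. 1 / real p) B" unfolding g_def by (meson exp_gt_zero less_le_trans)
  have E: "EE (Suc k) g B \<le> 4 ^ Suc k / fact (Suc k)"
  proof -
    have "EE (Suc k) g B \<le> (\<Sum>p\<in>B. g p) ^ Suc k / fact (Suc k)"
      using g by (intro EE_bound[OF fin]) auto
    also have "\<dots> \<le> 4 ^ Suc k / fact (Suc k)"
      using L g unfolding g_def by (intro divide_right_mono power_mono) (auto intro: sum_nonneg)
    finally show ?thesis .
  qed
  have f8: "8 ^ Suc k / fact (Suc k) \<le> exp (8::real)" by (rule pow_fact_le_exp) simp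
  have "4 ^ Suc k / fact (Suc k) = (8 ^ Suc k / fact (Suc k)) / (2::real) ^ Suc k"
  proof -
    have e8: "(8::real) ^ n = 4 ^ n * 2 ^ n" for n by (simp flip: power_mult_distrib)
    have "(4::real) ^ n / fact n = (8 ^ n / fact n) / 2 ^ n" for n unfolding e8 by simp
    then show ?thesis .
  qed
  also have "\<dots> \<le> exp 8 / 2 ^ Suc k" using f8 by (intro divide_right_mono) auto
  finally have E2: "EE (Suc k) g B \<le> exp 8 / 2 ^ Suc k" using E by linarith
  have E0: "0 \<le> EE (Suc k) g B" using g by (intro EE_nonneg) auto
  have Wp: "0 < WW g B" using W8 by (meson exp_gt_zero less_le_trans)
  have "EE (Suc k) g B / WW g B \<le> (exp 8 / 2 ^ Suc k) / exp (-8)"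
    using E2 E0 W8 by (intro frac_le) auto
  also have "\<dots> = exp 16 / 2 ^ Suc k"
  proof -
    have "exp (8::real) * exp 8 = exp 16" by (simp flip: exp_add)
    then show ?thesis by (simp add: exp_minus field_simps)
  qed
  finally show "EE (Suc k) (\<lambda>p. 1 / real p) B / WW (\<lambda>p. 1 / real p) B \<le> exp 16 / 2 ^ Suc k"
    unfolding g_def .
qed

lemma sum_pow2: "(\<Sum>j<M. (2::nat) ^ j) + 1 = 2 ^ M"
  by (induction M) auto

lemma expo_sum: "(\<Sum>j<M. (2 * (a + (M - 1 - j)) + 1) * (2::nat) ^ j) + (2 * a + 2 * M + 3) = 2 ^ M * (2 * a + 3)"
proof (induction M)
  case 0 then show ?case by simp
next
  case (Suc M)
  have "(\<Sum>j<Suc M. (2 * (a + (Suc M - 1 - j)) + 1) * (2::nat) ^ j)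
      = (\<Sum>j<M. (2 * (a + (M - 1 - j)) + 1) * 2 ^ j + 2 * 2 ^ j) + (2 * a + 1) * 2 ^ M"
  proof -
    have "(\<Sum>j<M. (2 * (a + (Suc M - 1 - j)) + 1) * (2::nat) ^ j) = (\<Sum>j<M. (2 * (a + (M - 1 - j)) + 1) * 2 ^ j + 2 * 2 ^ j)"
    proof (rule sum.cong)
      fix j assume "j \<in> {..<M}"
      then have "Suc M - 1 - j = Suc (M - 1 - j)" by auto
      then show "(2 * (a + (Suc M - 1 - j)) + 1) * (2::nat) ^ j = (2 * (a + (M - 1 - j)) + 1) * 2 ^ j + 2 * 2 ^ j"
        by (simp add: algebra_simps)
    qed simp
    then show ?thesis by simp
  qed
  also have "\<dots> = (\<Sum>j<M. (2 * (a + (M - 1 - j)) + 1) * 2 ^ j) + 2 * (\<Sum>j<M. (2::nat) ^ j) + (2 * a + 1) * 2 ^ M"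
    by (simp only: sum.distrib flip: sum_distrib_left)
  finally have e: "(\<Sum>j<Suc M. (2 * (a + (Suc M - 1 - j)) + 1) * (2::nat) ^ j) = \<dots>" .
  show ?case unfolding e using Suc.IH sum_pow2[of M] by (simp add: algebra_simps)
qed

lemma geo_quarter: "(\<Sum>j<M. (1/4::real) ^ (M - 1 - j)) \<le> 4/3"
proof (induction M)
  case 0 then show ?case by simp
next
  case (Suc M)
  have "(\<Sum>j<Suc M. (1/4::real) ^ (Suc M - 1 - j)) = 1 + (1/4) * (\<Sum>j<M. (1/4::real) ^ (M - 1 - j))"
  proof -
    have "(\<Sum>j<M. (1/4::real) ^ (Suc M - 1 - j)) = (\<Sum>j<M. (1/4) * (1/4::real) ^ (M - 1 - j))"
    proof (rule sum.cong)
      fix j assume "j \<in> {..<M}"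
      then have "Suc M - 1 - j = Suc (M - 1 - j)" by auto
      then show "(1/4::real) ^ (Suc M - 1 - j) = (1/4) * (1/4) ^ (M - 1 - j)" by simp
    qed simp
    then show ?thesis by (simp add: sum_distrib_left)
  qed
  then show ?case using Suc.IH by simp
qed

definition hi :: "nat \<Rightarrow> nat" where "hi j = 2 ^ 2 ^ j"
definition lo :: "nat \<Rightarrow> nat" where "lo j = (if j = 0 then 1 else hi (j - 1))"
definition blk :: "real \<Rightarrow> nat \<Rightarrow> nat set" where
  "blk z j = {p. prime p \<and> real p \<le> z \<and> lo j < p \<and> p \<le> hi j}"
definition mz :: "real \<Rightarrow> nat" where "mz z = (LEAST m. z \<le> real (hi m))"

lemma hi_mono: "i \<le> j \<Longrightarrow> hi i \<le> hi j"
  unfolding hi_def by (intro power_increasing) auto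

lemma hi_Suc: "hi (Suc j) = hi j ^ 2"
  unfolding hi_def by (simp add: power_mult[symmetric] power_Suc mult.commute)

lemma hi_ge: "j < hi j" "2 \<le> hi j"
proof -
  have "j < 2 ^ j" by (rule less_exp)
  also have "\<dots> \<le> 2 ^ 2 ^ j" by (intro power_increasing) (auto intro: less_exp[THEN less_imp_le])
  finally show "j < hi j" unfolding hi_def .
  have "2 ^ 1 \<le> (2::nat) ^ 2 ^ j" by (intro power_increasing) auto
  then show "2 \<le> hi j" unfolding hi_def by simp
qed

lemma exists_hi: "\<exists>m. z \<le> real (hi m)"
proof -
  obtain n :: nat where "z \<le> real n" using real_arch_simple by blast
  moreover have "n \<le> hi n" using hi_ge(1)[of n] by simp
  ultimately show ?thesis by (metis of_nat_le_iff order_trans)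
qed

lemma mz_props:
  assumes z: "z \<ge> 4"
  shows "z \<le> real (hi (mz z))" "mz z \<ge> 1" "real (hi (mz z - 1)) < z"
proof -
  show a: "z \<le> real (hi (mz z))" unfolding mz_def using exists_hi by (rule LeastI_ex)
  show b: "mz z \<ge> 1"
  proof (rule ccontr)
    assume "\<not> 1 \<le> mz z"
    then have "mz z = 0" by simp
    then show False using a z by (simp add: hi_def)
  qed
  have "\<not> z \<le> real (hi (mz z - 1))"
    unfolding mz_def[symmetric] by (rule not_less_Least) (use b in \<open>simp add: mz_def\<close>)
  then show "real (hi (mz z - 1)) < z" by simp
qed

lemma blk_union:
  assumes z: "z \<ge> 4"
  shows "(\<Union>j<Suc (mz z). blk z j) = {p. prime p \<and> real p \<le> z}"
proof (intro equalityI subsetI)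
  fix p assume "p \<in> (\<Union>j<Suc (mz z). blk z j)"
  then show "p \<in> {p. prime p \<and> real p \<le> z}" unfolding blk_def by auto
next
  fix p assume p: "p \<in> {p. prime p \<and> real p \<le> z}"
  then have pp: "prime p" "real p \<le> z" by auto
  have ex: "\<exists>j. p \<le> hi j" using hi_ge(1)[of p] by (auto intro: less_imp_le)
  define j where "j = (LEAST j. p \<le> hi j)"
  have pj: "p \<le> hi j" unfolding j_def using ex by (rule LeastI_ex)
  have "p \<le> hi (mz z)" using pp mz_props(1)[OF z] by linarith
  then have jm: "j \<le> mz z" unfolding j_def by (rule Least_le)
  have "lo j < p"
  proof (cases j)
    case 0 then show ?thesis using prime_gt_1_nat[OF pp(1)] by (simp add: lo_def)
  next
    case (Suc i)
    have "\<not> p \<le> hi i" unfolding j_def by (rule not_less_Least) (simp add: Suc j_def[symmetric])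
    then show ?thesis using Suc by (simp add: lo_def)
  qed
  then have "p \<in> blk z j" using pp pj unfolding blk_def by auto
  then show "p \<in> (\<Union>j<Suc (mz z). blk z j)" using jm by auto
qed

lemma blk_disj: "i \<noteq> j \<Longrightarrow> blk z i \<inter> blk z j = {}"
proof -
  have *: "blk z i \<inter> blk z j = {}" if "i < j" for i j
  proof -
    have "hi i \<le> lo j" using that hi_mono[of i "j - 1"] by (auto simp: lo_def)
    then show ?thesis unfolding blk_def by auto
  qed
  assume "i \<noteq> j"
  then show ?thesis using *[of i j] *[of j i] by (cases "i < j") (auto simp: Int_commute)
qed

lemma blk_fin: "finite (blk z j)"
  unfolding blk_def by (rule finite_subset[of _ "{..hi j}"]) auto

lemma blk_card: "real (card (blk z j)) + 1 \<le> real (hi j)"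
proof -
  have "blk z j \<subseteq> {2..hi j}" unfolding blk_def using prime_ge_2_nat by auto
  then have "card (blk z j) \<le> card {2..hi j}" by (intro card_mono) auto
  then have "card (blk z j) + 1 \<le> hi j" using hi_ge(2)[of j] by simp
  then show ?thesis by (metis of_nat_1 of_nat_add of_nat_le_iff)
qed

lemma blk_L: "(\<Sum>p\<in>blk z j. 1 / real p) \<le> 4"
proof (cases j)
  case 0
  have "blk z j \<subseteq> {2}" unfolding blk_def 0 lo_def hi_def by auto
  then have "(\<Sum>p\<in>blk z j. 1 / real p) \<le> (\<Sum>p\<in>{2::nat}. 1 / real p)"
    by (intro sum_mono2) auto
  then show ?thesis by simp
next
  case (Suc i)
  have "blk z j \<subseteq> {p. prime p \<and> hi i < p \<and> p \<le> hi i ^ 2}"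
    unfolding blk_def Suc lo_def hi_Suc by auto
  then show ?thesis using hi_ge(2)[of i] by (intro block_L) auto
qed

lemma coprime_primorial_iff:
  assumes "finite Q" "\<forall>p\<in>Q. prime p"
  shows "coprime n (\<Prod>p\<in>Q. int p) \<longleftrightarrow> (\<forall>p\<in>Q. \<not> int p dvd n)"
proof
  assume c: "coprime n (\<Prod>p\<in>Q. int p)"
  show "\<forall>p\<in>Q. \<not> int p dvd n"
  proof (intro ballI notI)
    fix p assume p: "p \<in> Q" "int p dvd n"
    have "int p dvd (\<Prod>p\<in>Q. int p)" using assms(1) p(1) by (rule dvd_prodI)
    then have "is_unit (int p)" using coprime_common_divisor[OF c p(2)] by simp
    moreover have "prime p" using assms(2) p(1) by auto
    ultimately show False by simp
  qed
next
  assume h: "\<forall>p\<in>Q. \<not> int p dvd n"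
  show "coprime n (\<Prod>p\<in>Q. int p)"
  proof (rule prod_coprime_right)
    fix p assume "p \<in> Q"
    then have "coprime (int p) n" using h assms(2) by (intro prime_imp_coprime) auto
    then show "coprime n (int p)" by (simp add: coprime_commute)
  qed
qed

lemma sieve_S_sum:
  assumes z: "z \<ge> 4"
  shows "real (sieve_S x y z) = (\<Sum>n\<in>Iv x y. \<Prod>j<Suc (mz z). WW (ind n) (blk z j))"
proof -
  define Q where "Q = {p. prime p \<and> real p \<le> z}"
  have Qeq: "Q = (\<Union>j<Suc (mz z). blk z j)" unfolding Q_def using blk_union[OF z] by simp
  have finQ: "finite Q" unfolding Qeq using blk_fin by auto
  have prQ: "\<forall>p\<in>Q. prime p" unfolding Q_def by auto
  have prodsplit: "(\<Prod>p\<in>Q. f p) = (\<Prod>j<Suc (mz z). \<Prod>p\<in>blk z j. f p)" for f :: "nat \<Rightarrow> real"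
    unfolding Qeq by (rule prod.UNION_disjoint) (auto simp: blk_fin blk_disj)
  have "sieve_S x y z = card {n\<in>Iv x y. coprime n (primorial_P z)}"
    unfolding sieve_S_def Iv_def by (rule arg_cong[where f=card]) auto
  also have "{n\<in>Iv x y. coprime n (primorial_P z)} = {n\<in>Iv x y. \<forall>p\<in>Q. \<not> int p dvd n}"
    unfolding primorial_P_def Q_def[symmetric] using coprime_primorial_iff[OF finQ prQ] by auto
  finally have "real (sieve_S x y z) = (\<Sum>n\<in>Iv x y. if \<forall>p\<in>Q. \<not> int p dvd n then 1 else 0)"
  proof -
    assume e: "sieve_S x y z = card {n\<in>Iv x y. \<forall>p\<in>Q. \<not> int p dvd n}"
    have "Iv x y \<inter> {n. \<forall>p\<in>Q. \<not> int p dvd n} = {n\<in>Iv x y. \<forall>p\<in>Q. \<not> int p dvd n}" by auto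
    then show ?thesis unfolding e using finite_Iv[of x y] by (simp add: sum.If_cases)
  qed
  also have "\<dots> = (\<Sum>n\<in>Iv x y. \<Prod>p\<in>Q. 1 - ind n p)"
  proof (rule sum.cong)
    fix n
    show "(if \<forall>p\<in>Q. \<not> int p dvd n then 1 else 0) = (\<Prod>p\<in>Q. 1 - ind n p)"
    proof (cases "\<forall>p\<in>Q. \<not> int p dvd n")
      case True then show ?thesis by (simp add: ind_def)
    next
      case False
      then obtain p where "p \<in> Q" "int p dvd n" by auto
      then have "(\<Prod>p\<in>Q. 1 - ind n p) = 0" using finQ by (intro prod_zero) (auto simp: ind_def intro!: bexI[of _ p])
      then show ?thesis using False by simp
    qed
  qed simp
  also have "\<dots> = (\<Sum>n\<in>Iv x y. \<Prod>j<Suc (mz z). WW (ind n) (blk z j))"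
    unfolding WW_def by (intro sum.cong refl prodsplit)
  finally show ?thesis .
qed

lemma mertens_split:
  assumes z: "z \<ge> 4"
  shows "mertens_prod z = (\<Prod>j<Suc (mz z). WW (\<lambda>p. 1 / real p) (blk z j))"
proof -
  have Qeq: "{p. prime p \<and> real p \<le> z} = (\<Union>j<Suc (mz z). blk z j)" using blk_union[OF z] by simp
  show ?thesis unfolding mertens_prod_def WW_def Qeq
    by (rule prod.UNION_disjoint) (auto simp: blk_fin blk_disj)
qed

theorem FL:
  fixes a :: nat and x y z :: real
  assumes z: "z \<ge> 4" and y: "y \<ge> 0"
  shows "real (sieve_S x y z) \<le> y * mertens_prod z * exp (exp 16 / 4 ^ a) + z ^ (8 * a + 13)"
    "y * mertens_prod z * (1 - (exp 16 / 4 ^ a) * exp (exp 16 / 4 ^ a)) - 2 * z ^ (8 * a + 13) \<le> real (sieve_S x y z)"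
proof -
  define m where "m = mz z"
  define M where "M = Suc m"
  define B where "B = blk z"
  define k where "k j = 2 * (a + (M - 1 - j))" for j
  define g where "g = (\<lambda>p::nat. 1 / real p)"
  define \<delta> where "\<delta> = (exp 16 / 4 ^ a :: real)"
  have m1: "m \<ge> 1" "real (hi (m - 1)) < z" using mz_props[OF z] unfolding m_def by auto
  have fin: "\<forall>j<M. finite (B j)" unfolding B_def using blk_fin by auto
  have disj: "\<forall>i<M. \<forall>j<M. i \<noteq> j \<longrightarrow> B i \<inter> B j = {}" unfolding B_def using blk_disj by auto
  have pr: "\<forall>j<M. \<forall>p\<in>B j. prime p" unfolding B_def blk_def by auto
  have ev: "\<forall>j<M. even (k j)" unfolding k_def by auto
  have gb: "\<forall>p\<in>B j. 0 \<le> g p \<and> g p \<le> 1" for j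
    using pr unfolding g_def B_def blk_def by (auto simp: prime_gt_0_nat)
  have hWT: "\<forall>j\<in>{..<M}. 0 < WW g (B j) \<and> WW g (B j) \<le> TT (k j) g (B j) \<and> TT (k j) g (B j) \<le> WW g (B j) + EE (Suc (k j)) g (B j)"
  proof
    fix j assume j: "j \<in> {..<M}"
    have "0 < WW g (B j)" unfolding g_def B_def by (rule block_est(1)[OF blk_fin _ blk_L]) (auto simp: blk_def)
    moreover have "WW g (B j) \<le> TT (k j) g (B j)" "TT (k j) g (B j) - WW g (B j) \<le> EE (Suc (k j)) g (B j)"
      using bonf_even[OF _ gb, of j "k j"] fin ev j by auto
    ultimately show "0 < WW g (B j) \<and> WW g (B j) \<le> TT (k j) g (B j) \<and> TT (k j) g (B j) \<le> WW g (B j) + EE (Suc (k j)) g (B j)"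
      by auto
  qed
  have dl: "(\<Sum>j<M. EE (Suc (k j)) g (B j) / WW g (B j)) \<le> \<delta>"
  proof -
    have "(\<Sum>j<M. EE (Suc (k j)) g (B j) / WW g (B j)) \<le> (\<Sum>j<M. exp 16 / 2 ^ Suc (k j))"
    proof (rule sum_mono)
      fix j assume "j \<in> {..<M}"
      show "EE (Suc (k j)) g (B j) / WW g (B j) \<le> exp 16 / 2 ^ Suc (k j)"
        unfolding g_def B_def by (rule block_est(2)[OF blk_fin _ blk_L]) (auto simp: blk_def)
    qed
    also have "\<dots> = (\<Sum>j<M. (exp 16 / 2 * (1/4) ^ a) * (1/4::real) ^ (M - 1 - j))"
    proof (rule sum.cong)
      fix j assume "j \<in> {..<M}"
      have "(2::real) ^ Suc (k j) = 2 * 4 ^ a * 4 ^ (M - 1 - j)"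
        unfolding k_def by (simp add: power_add power_mult)
      then show "exp 16 / 2 ^ Suc (k j) = (exp 16 / 2 * (1/4) ^ a) * (1/4::real) ^ (M - 1 - j)"
        by (simp add: power_one_over field_simps)
    qed simp
    also have "\<dots> = (exp 16 / 2 * (1/4) ^ a) * (\<Sum>j<M. (1/4::real) ^ (M - 1 - j))"
      by (simp add: sum_distrib_left)
    also have "\<dots> \<le> (exp 16 / 2 * (1/4) ^ a) * (4/3)"
      by (intro mult_left_mono geo_quarter) auto
    also have "\<dots> \<le> \<delta>" unfolding \<delta>_def by (simp add: power_one_over field_simps)
    finally show ?thesis .
  qed
  note R = rel_bounds[OF _ hWT dl]
  have Wm: "mertens_prod z = (\<Prod>j<M. WW g (B j))"
    unfolding M_def m_def B_def g_def by (rule mertens_split[OF z])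
  have Rb: "(\<Prod>j<M. (real (card (B j)) + 1) ^ Suc (k j)) \<le> z ^ (8 * a + 12)"
  proof -
    have "(\<Prod>j<M. (real (card (B j)) + 1) ^ Suc (k j)) \<le> (\<Prod>j<M. real (hi j) ^ Suc (k j))"
      unfolding B_def by (intro prod_mono conjI power_mono blk_card) auto
    also have "\<dots> = (\<Prod>j<M. (2::real) ^ ((2 * (a + (M - 1 - j)) + 1) * 2 ^ j))"
      unfolding hi_def k_def by (intro prod.cong refl) (simp only: of_nat_power of_nat_numeral power_mult[symmetric] mult.commute Suc_eq_plus1)
    also have "\<dots> = 2 ^ (\<Sum>j<M. (2 * (a + (M - 1 - j)) + 1) * 2 ^ j)"
      by (simp add: power_sum)
    also have "\<dots> \<le> (2::real) ^ (2 ^ M * (2 * a + 3))"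
      using expo_sum[where M=M and a=a] by (intro power_increasing) linarith+
    also have "2 ^ M * (2 * a + 3) = 2 ^ (m - 1) * (8 * a + 12)"
    proof -
      have "M = (m - 1) + 2" unfolding M_def using m1 by simp
      then have "(2::nat) ^ M = 2 ^ (m - 1) * 4" by (simp add: power_add)
      then show ?thesis by simp
    qed
    also have "(2::real) ^ (2 ^ (m - 1) * (8 * a + 12)) = real (hi (m - 1)) ^ (8 * a + 12)"
      unfolding hi_def by (simp add: power_mult)
    also have "\<dots> \<le> z ^ (8 * a + 12)" using m1 by (intro power_mono) auto
    finally show ?thesis .
  qed
  have SM: "real (Suc M) \<le> 2 * z"
  proof -
    have "m - 1 < hi (m - 1)" by (rule hi_ge)
    then have "real (m - 1) < z" using m1 by (metis of_nat_less_iff less_trans)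
    then show ?thesis unfolding M_def using m1 z by linarith
  qed
  have z1213: "z ^ (8 * a + 12) \<le> z ^ (8 * a + 13)" using z by (intro power_increasing) auto
  have zpos: "0 \<le> z ^ (8 * a + 12)" using z by simp
  have S: "real (sieve_S x y z) = (\<Sum>n\<in>Iv x y. \<Prod>j<M. WW (ind n) (B j))"
    unfolding M_def m_def B_def by (rule sieve_S_sum[OF z])
  show "real (sieve_S x y z) \<le> y * mertens_prod z * exp (exp 16 / 4 ^ a) + z ^ (8 * a + 13)"
  proof -
    have "real (sieve_S x y z) \<le> y * (\<Prod>j<M. TT (k j) g (B j)) + (\<Prod>j<M. (real (card (B j)) + 1) ^ Suc (k j))"
      unfolding S g_def by (rule sieve_upper[OF fin disj pr y ev])
    also have "\<dots> \<le> y * (mertens_prod z * exp \<delta>) + z ^ (8 * a + 13)"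
      using R(1) Rb z1213 y unfolding Wm by (intro add_mono mult_left_mono) auto
    finally show ?thesis unfolding \<delta>_def by (simp add: mult.assoc)
  qed
  show "y * mertens_prod z * (1 - (exp 16 / 4 ^ a) * exp (exp 16 / 4 ^ a)) - 2 * z ^ (8 * a + 13) \<le> real (sieve_S x y z)"
  proof -
    have low: "y * (\<Prod>j<M. TT (k j) g (B j))
       - y * (\<Sum>i<M. EE (Suc (k i)) g (B i) * (\<Prod>j\<in>{..<M} - {i}. TT (k j) g (B j)))
       - real (Suc M) * (\<Prod>j<M. (real (card (B j)) + 1) ^ Suc (k j)) \<le> real (sieve_S x y z)"
      unfolding S g_def by (rule sieve_lower[OF fin disj pr y ev])
    have a1: "y * mertens_prod z \<le> y * (\<Prod>j<M. TT (k j) g (B j))"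
      using R(2) y unfolding Wm by (intro mult_left_mono) auto
    have a2: "y * (\<Sum>i<M. EE (Suc (k i)) g (B i) * (\<Prod>j\<in>{..<M} - {i}. TT (k j) g (B j))) \<le> y * (mertens_prod z * (\<delta> * exp \<delta>))"
      using R(3) y unfolding Wm by (intro mult_left_mono) auto
    have a3: "real (Suc M) * (\<Prod>j<M. (real (card (B j)) + 1) ^ Suc (k j)) \<le> (2 * z) * z ^ (8 * a + 12)"
    proof (rule mult_mono)
      show "0 \<le> (\<Prod>j<M. (real (card (B j)) + 1) ^ Suc (k j))" by (intro prod_nonneg) auto
    qed (use SM Rb z in auto)
    have a4: "(2 * z) * z ^ (8 * a + 12) = 2 * z ^ (8 * a + 13)"
    proof -
      have "8 * a + 13 = Suc (8 * a + 12)" by simp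
      then show ?thesis by (simp only: power_Suc mult.assoc)
    qed
    show ?thesis using low a1 a2 a3 a4 unfolding \<delta>_def by (simp add: algebra_simps)
  qed
qed

lemma sieve_S_Iv: "sieve_S x y z = card {n\<in>Iv x y. coprime n (primorial_P z)}"
  unfolding sieve_S_def Iv_def by (rule arg_cong[where f=card]) auto

lemma S_le_y:
  assumes "y \<ge> 0"
  shows "real (sieve_S x y z) \<le> y + 1"
proof -
  have "sieve_S x y z \<le> card (Iv x y)" unfolding sieve_S_Iv by (intro card_mono finite_Iv) auto
  also have "card (Iv x y) = nat (\<lfloor>x + y\<rfloor> - \<lfloor>x\<rfloor>)"
    unfolding Iv_def using assms by (intro card_int_interval) auto
  finally have "real (sieve_S x y z) \<le> real (nat (\<lfloor>x + y\<rfloor> - \<lfloor>x\<rfloor>))" by simp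
  also have "\<dots> = of_int \<lfloor>x + y\<rfloor> - of_int \<lfloor>x\<rfloor>" using assms by (simp add: floor_mono)
  also have "\<dots> \<le> y + 1" using floor_correct[of "x+y"] floor_correct[of x] by linarith
  finally show ?thesis .
qed

lemma S_range_finite:
  assumes "y \<ge> 0"
  shows "finite (range (\<lambda>x. sieve_S x y z))"
proof -
  have "range (\<lambda>x. sieve_S x y z) \<subseteq> {..nat \<lceil>y + 1\<rceil>}"
  proof
    fix n assume "n \<in> range (\<lambda>x. sieve_S x y z)"
    then obtain x where n: "n = sieve_S x y z" by auto
    have "real n \<le> y + 1" using S_le_y[OF assms] n by simp
    then have "n \<le> nat \<lceil>y + 1\<rceil>" by linarith
    then show "n \<in> {..nat \<lceil>y + 1\<rceil>}" by simp
  qed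
  then show ?thesis by (rule finite_subset) simp
qed

lemma Splus_mem: "y \<ge> 0 \<Longrightarrow> sieve_S_plus y z \<in> range (\<lambda>x. sieve_S x y z)"
  unfolding sieve_S_plus_def using S_range_finite
  by (subst cSup_eq_Max) (auto intro!: Max_in)

lemma Splus_ge: "y \<ge> 0 \<Longrightarrow> sieve_S x y z \<le> sieve_S_plus y z"
  unfolding sieve_S_plus_def using S_range_finite
  by (intro cSup_upper bdd_above_finite) auto

lemma Sminus_mem: "sieve_S_minus y z \<in> range (\<lambda>x. sieve_S x y z)"
  unfolding sieve_S_minus_def by (rule Inf_nat_def1) auto

lemma Sminus_le: "sieve_S_minus y z \<le> sieve_S x y z"
  unfolding sieve_S_minus_def by (intro cInf_lower) auto

lemma Splus_le_bound:
  assumes "y \<ge> 0" "\<And>x. real (sieve_S x y z) \<le> r"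
  shows "real (sieve_S_plus y z) \<le> r"
  using Splus_mem[OF assms(1), of z] assms(2) by auto

lemma Sminus_ge_bound:
  assumes "\<And>x. r \<le> real (sieve_S x y z)"
  shows "r \<le> real (sieve_S_minus y z)"
  using Sminus_mem[of y z] assms by auto

lemma S_add:
  assumes "y1 \<ge> 0" "y2 \<ge> 0"
  shows "sieve_S x (y1 + y2) z = sieve_S x y1 z + sieve_S (x + y1) y2 z"
proof -
  let ?C = "\<lambda>n. coprime n (primorial_P z)"
  have "{n\<in>Iv x (y1 + y2). ?C n} = {n\<in>Iv x y1. ?C n} \<union> {n\<in>Iv (x + y1) y2. ?C n}"
    unfolding Iv_def using assms by auto
  moreover have "{n\<in>Iv x y1. ?C n} \<inter> {n\<in>Iv (x + y1) y2. ?C n} = {}" unfolding Iv_def by auto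
  ultimately show ?thesis unfolding sieve_S_Iv
    by (simp add: card_Un_disjoint finite_Iv)
qed

lemma S_mono_y:
  assumes "y \<le> y'"
  shows "sieve_S x y z \<le> sieve_S x y' z"
proof -
  have "{n\<in>Iv x y. coprime n (primorial_P z)} \<subseteq> {n\<in>Iv x y'. coprime n (primorial_P z)}"
    using assms unfolding Iv_def by auto
  moreover have "finite {n\<in>Iv x y'. coprime n (primorial_P z)}" using finite_Iv by auto
  ultimately show ?thesis unfolding sieve_S_Iv by (rule card_mono[rotated])
qed

lemma S_mult_upper:
  assumes "Y \<ge> 0"
  shows "sieve_S x (real N * Y) z \<le> N * sieve_S_plus Y z"
proof (induction N arbitrary: x)
  case 0
  have "{n::int. x < real_of_int n \<and> real_of_int n \<le> x + 0 \<and> coprime n (primorial_P z)} = {}" by auto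
  then have "sieve_S x 0 z = 0" unfolding sieve_S_def by (metis card.empty)
  then show ?case by simp
next
  case (Suc N)
  have "sieve_S x (real (Suc N) * Y) z = sieve_S x (Y + real N * Y) z" by (simp add: algebra_simps)
  also have "\<dots> = sieve_S x Y z + sieve_S (x + Y) (real N * Y) z"
    using assms by (intro S_add) auto
  also have "\<dots> \<le> sieve_S_plus Y z + N * sieve_S_plus Y z"
    using Suc.IH Splus_ge[OF assms] by (intro add_mono) auto
  finally show ?case by simp
qed

lemma S_mult_lower:
  assumes "Y \<ge> 0"
  shows "N * sieve_S_minus Y z \<le> sieve_S x (real N * Y) z"
proof (induction N arbitrary: x)
  case 0 then show ?case by simp
next
  case (Suc N)
  have "Suc N * sieve_S_minus Y z = sieve_S_minus Y z + N * sieve_S_minus Y z" by simp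
  also have "\<dots> \<le> sieve_S x Y z + sieve_S (x + Y) (real N * Y) z"
    using Suc.IH Sminus_le by (intro add_mono) auto
  also have "\<dots> = sieve_S x (Y + real N * Y) z"
    using assms by (intro S_add[symmetric]) auto
  also have "\<dots> = sieve_S x (real (Suc N) * Y) z" by (simp add: algebra_simps)
  finally show ?case .
qed

lemma mertens_lower:
  assumes z: "z \<ge> 1"
  shows "1 / z \<le> mertens_prod z"
proof -
  define N where "N = nat \<lfloor>z\<rfloor>"
  have N1: "N \<ge> 1" using z unfolding N_def by linarith
  have Nz: "real N \<le> z" unfolding N_def using z by linarith
  have tele: "(\<Prod>m\<in>{2..n}. 1 - 1 / real m) = 1 / real n" if "n \<ge> 1" for n
    using that
  proof (induction n rule: dec_induct)
    case base then show ?case by simp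
  next
    case (step n)
    have "{2..Suc n} = insert (Suc n) {2..n}" using step by auto
    then have "(\<Prod>m\<in>{2..Suc n}. 1 - 1 / real m) = (1 - 1 / real (Suc n)) * (1 / real n)"
      using step by simp
    also have "\<dots> = 1 / real (Suc n)" using step by (simp add: field_simps)
    finally show ?case .
  qed
  define P where "P = {p. prime p \<and> real p \<le> z}"
  have PS: "P \<subseteq> {2..N}" unfolding P_def N_def using prime_ge_2_nat by (auto simp: le_nat_floor)
  have f01: "0 \<le> 1 - 1 / real m \<and> 1 - 1 / real m \<le> 1" if "m \<in> {2..N}" for m using that by auto
  have "(\<Prod>m\<in>{2..N}. 1 - 1 / real m) = (\<Prod>m\<in>P. 1 - 1 / real m) * (\<Prod>m\<in>{2..N} - P. 1 - 1 / real m)"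
    using PS by (metis (no_types, lifting) finite_atLeastAtMost prod.subset_diff mult.commute)
  also have "\<dots> \<le> (\<Prod>m\<in>P. 1 - 1 / real m)"
  proof (rule mult_left_le)
    show "(\<Prod>m\<in>{2..N} - P. 1 - 1 / real m) \<le> 1" using f01 by (intro prod_le_1) auto
    show "0 \<le> (\<Prod>m\<in>P. 1 - 1 / real m)" using f01 PS by (intro prod_nonneg) auto
  qed
  finally have "1 / real N \<le> mertens_prod z" using tele[OF N1] unfolding mertens_prod_def P_def by simp
  moreover have "1 / z \<le> 1 / real N" using Nz N1 by (intro divide_left_mono) auto
  ultimately show ?thesis by linarith
qed

definition rp :: "real \<Rightarrow> real \<Rightarrow> real" where
  "rp u z = real (sieve_S_plus (z powr u) z) / (mertens_prod z * z powr u)"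
definition rm :: "real \<Rightarrow> real \<Rightarrow> real" where
  "rm u z = real (sieve_S_minus (z powr u) z) / (mertens_prod z * z powr u)"

lemma sigma_plus_rp: "sigma_plus u = Limsup at_top (\<lambda>z. ereal (rp u z))"
  unfolding sigma_plus_def rp_def ..
lemma sigma_minus_rm: "sigma_minus u = Liminf at_top (\<lambda>z. ereal (rm u z))"
  unfolding sigma_minus_def rm_def ..

lemma mertens_nonneg: "0 \<le> mertens_prod z"
  unfolding mertens_prod_def by (intro prod_nonneg) (auto simp: prime_gt_0_nat dest: prime_gt_1_nat)

lemma rp_nonneg: "0 \<le> rp u z" unfolding rp_def using mertens_nonneg by simp
lemma rm_nonneg: "0 \<le> rm u z" unfolding rm_def using mertens_nonneg by simp

lemma rm_le_rp: "rm u z \<le> rp u z"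
proof -
  have "sieve_S_minus (z powr u) z \<le> sieve_S_plus (z powr u) z"
    using Sminus_le[of "z powr u" z 0] Splus_ge[of "z powr u" 0 z] by simp
  then show ?thesis unfolding rm_def rp_def using mertens_nonneg
    by (intro divide_right_mono) auto
qed

lemma rp_mono_step:
  assumes z: "z \<ge> 4" and uv: "u < v"
  shows "rp v z \<le> (1 + z powr (u - v)) * rp u z"
proof -
  define Y where "Y = z powr u"
  define t where "t = z powr (v - u)"
  define N where "N = nat \<lceil>t\<rceil>"
  have Y0: "Y > 0" unfolding Y_def using z by simp
  have t1: "t \<ge> 1" unfolding t_def using z uv by (intro ge_one_powr_ge_zero) auto
  have zv: "z powr v = t * Y" unfolding t_def Y_def using z by (simp add: powr_add[symmetric])
  have Nt: "t \<le> real N" "real N \<le> t + 1" unfolding N_def using t1 by linarith+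
  have "real (sieve_S_plus (z powr v) z) \<le> real (N * sieve_S_plus Y z)"
  proof (rule Splus_le_bound)
    show "0 \<le> z powr v" by simp
    fix x
    have "sieve_S x (z powr v) z \<le> sieve_S x (real N * Y) z"
      unfolding zv using Nt Y0 by (intro S_mono_y mult_right_mono) auto
    also have "\<dots> \<le> N * sieve_S_plus Y z" using Y0 by (intro S_mult_upper) auto
    finally show "real (sieve_S x (z powr v) z) \<le> real (N * sieve_S_plus Y z)" by (simp only: of_nat_le_iff)
  qed
  have W: "mertens_prod z > 0"
  proof -
    have "0 < 1 / z" using z by simp
    then show ?thesis using mertens_lower[of z] z by linarith
  qed
  have "rp v z \<le> real (N * sieve_S_plus Y z) / (mertens_prod z * (t * Y))"
    unfolding rp_def zv[symmetric] using \<open>real (sieve_S_plus (z powr v) z) \<le> _\<close> W Y0 t1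
    by (intro divide_right_mono) auto
  also have "\<dots> = (real N / t) * rp u z" unfolding rp_def Y_def[symmetric] using t1 Y0 W by (simp add: field_simps)
  also have "\<dots> \<le> (1 + z powr (u - v)) * rp u z"
  proof (rule mult_right_mono)
    have "real N / t \<le> (t + 1) / t" using Nt t1 by (intro divide_right_mono) auto
    also have "\<dots> = 1 + 1 / t" using t1 by (simp add: field_simps)
    also have "1 / t = z powr (u - v)" unfolding t_def using z by (simp add: powr_minus_divide[symmetric] powr_minus)
    finally show "real N / t \<le> 1 + z powr (u - v)" .
  qed (rule rp_nonneg)
  finally show ?thesis .
qed

lemma rm_mono_step:
  assumes z: "z \<ge> 4" and uv: "u < v"
  shows "(1 - z powr (u - v)) * rm u z \<le> rm v z"
proof -
  define Y where "Y = z powr u"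
  define t where "t = z powr (v - u)"
  define N where "N = nat \<lfloor>t\<rfloor>"
  have Y0: "Y > 0" unfolding Y_def using z by simp
  have t1: "t \<ge> 1" unfolding t_def using z uv by (intro ge_one_powr_ge_zero) auto
  have zv: "z powr v = t * Y" unfolding t_def Y_def using z by (simp add: powr_add[symmetric])
  have Nt: "real N \<le> t" "t - 1 \<le> real N" unfolding N_def using t1 by linarith+
  have low: "real (N * sieve_S_minus Y z) \<le> real (sieve_S_minus (z powr v) z)"
  proof (rule Sminus_ge_bound)
    fix x
    have "N * sieve_S_minus Y z \<le> sieve_S x (real N * Y) z" using Y0 by (intro S_mult_lower) auto
    also have "\<dots> \<le> sieve_S x (z powr v) z"
      unfolding zv using Nt Y0 by (intro S_mono_y mult_right_mono) auto
    finally show "real (N * sieve_S_minus Y z) \<le> real (sieve_S x (z powr v) z)" by (simp only: of_nat_le_iff)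
  qed
  have W: "mertens_prod z > 0"
  proof -
    have "0 < 1 / z" using z by simp
    then show ?thesis using mertens_lower[of z] z by linarith
  qed
  have "(1 - z powr (u - v)) * rm u z \<le> (real N / t) * rm u z"
  proof (rule mult_right_mono)
    have "1 / t = z powr (u - v)" unfolding t_def using z by (simp add: powr_minus_divide[symmetric] powr_minus)
    then have "1 - z powr (u - v) = (t - 1) / t" using t1 by (simp add: field_simps)
    also have "\<dots> \<le> real N / t" using Nt t1 by (intro divide_right_mono) auto
    finally show "1 - z powr (u - v) \<le> real N / t" .
  qed (rule rm_nonneg)
  also have "\<dots> = real (N * sieve_S_minus Y z) / (mertens_prod z * (t * Y))"
    unfolding rm_def Y_def[symmetric] using t1 Y0 W by (simp add: field_simps)
  also have "\<dots> \<le> rm v z"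
    unfolding rm_def zv[symmetric] using low W Y0 t1 by (intro divide_right_mono) auto
  finally show ?thesis .
qed

lemma eps_plus:
  fixes x y :: ereal
  assumes h: "\<And>\<epsilon>. \<epsilon> > 0 \<Longrightarrow> x \<le> ereal (1 + \<epsilon>) * y" and y: "0 \<le> y"
  shows "x \<le> y"
proof (cases y)
  case PInf then show ?thesis by simp
next
  case MInf then show ?thesis using y by simp
next
  case (real r)
  have r: "0 \<le> r" using y real by simp
  show ?thesis
  proof (cases x)
    case PInf then show ?thesis using h[of 1] real by simp
  next
    case MInf then show ?thesis by simp
  next
    case (real s)
    have "s \<le> r"
    proof (rule field_le_epsilon)
      fix e :: real assume e: "0 < e"
      define \<epsilon> where "\<epsilon> = e / (r + 1)"
      have ep: "\<epsilon> > 0" unfolding \<epsilon>_def using e r by simp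
      have "s \<le> (1 + \<epsilon>) * r" using h[OF ep] real \<open>y = ereal r\<close> by simp
      also have "\<dots> = r + e * (r / (r + 1))" unfolding \<epsilon>_def using r by (simp add: field_simps)
      also have "\<dots> \<le> r + e * 1" using e r by (intro add_left_mono mult_left_mono) auto
      finally show "s \<le> r + e" by simp
    qed
    then show ?thesis using real \<open>y = ereal r\<close> by simp
  qed
qed

lemma eps_minus:
  fixes x y :: ereal
  assumes h: "\<And>\<epsilon>. 0 < \<epsilon> \<Longrightarrow> \<epsilon> < 1 \<Longrightarrow> ereal (1 - \<epsilon>) * y \<le> x" and y: "0 \<le> y"
  shows "y \<le> x"
proof (cases y)
  case PInf
  have "ereal (1 - 1/2) * y \<le> x" by (rule h) auto
  then show ?thesis using PInf by simp
next
  case MInf then show ?thesis using y by simp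
next
  case (real r)
  have r: "0 \<le> r" using y real by simp
  show ?thesis
  proof (cases x)
    case PInf then show ?thesis by simp
  next
    case MInf
    have "ereal (1 - 1/2) * y \<le> x" by (rule h) auto
    then show ?thesis using MInf real by simp
  next
    case (real s)
    have "r \<le> s"
    proof (rule field_le_epsilon)
      fix e :: real assume e: "0 < e"
      define \<epsilon> where "\<epsilon> = e / (r + e + 1)"
      have ep: "\<epsilon> > 0" "\<epsilon> < 1" unfolding \<epsilon>_def using e r by (auto simp: field_simps)
      have "(1 - \<epsilon>) * r \<le> s" using h[OF ep] real \<open>y = ereal r\<close> by simp
      moreover have "\<epsilon> * r \<le> e"
      proof -
        have "\<epsilon> * r = e * (r / (r + e + 1))" unfolding \<epsilon>_def by simp
        also have "\<dots> \<le> e * 1" using e r by (intro mult_left_mono) auto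
        finally show ?thesis by simp
      qed
      ultimately show "r \<le> s + e" by (simp add: algebra_simps)
    qed
    then show ?thesis using real \<open>y = ereal r\<close> by simp
  qed
qed

lemma powr_neg_tendsto: "u < v \<Longrightarrow> ((\<lambda>z::real. z powr (u - v)) \<longlongrightarrow> 0) at_top"
  by (intro tendsto_neg_powr filterlim_ident) auto

lemma sigma_plus_nonneg: "0 \<le> sigma_plus u"
  unfolding sigma_plus_rp by (rule le_Limsup) (auto simp: rp_nonneg)

lemma sigma_minus_nonneg: "0 \<le> sigma_minus u"
  unfolding sigma_minus_rm by (rule Liminf_bounded) (auto simp: rm_nonneg)

lemma sigma_plus_mono:
  assumes "u \<le> v"
  shows "sigma_plus v \<le> sigma_plus u"
proof (cases "u = v")
  case True then show ?thesis by simp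
next
  case False
  then have uv: "u < v" using assms by simp
  show ?thesis
  proof (rule eps_plus[OF _ sigma_plus_nonneg])
    fix \<epsilon> :: real assume ep: "\<epsilon> > 0"
    have ev: "eventually (\<lambda>z. z powr (u - v) < \<epsilon>) at_top"
      using order_tendstoD(2)[OF powr_neg_tendsto[OF uv] ep] .
    have "eventually (\<lambda>z. ereal (rp v z) \<le> ereal (1 + \<epsilon>) * ereal (rp u z)) at_top"
      using ev eventually_ge_at_top[of "4::real"]
    proof eventually_elim
      case (elim z)
      have "rp v z \<le> (1 + z powr (u - v)) * rp u z" by (rule rp_mono_step[OF elim(2) uv])
      also have "\<dots> \<le> (1 + \<epsilon>) * rp u z" using elim(1) rp_nonneg by (intro mult_right_mono) auto
      finally show ?case by simp
    qed
    then have "sigma_plus v \<le> Limsup at_top (\<lambda>z. ereal (1 + \<epsilon>) * ereal (rp u z))"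
      unfolding sigma_plus_rp by (rule Limsup_mono)
    also have "\<dots> = ereal (1 + \<epsilon>) * sigma_plus u"
      unfolding sigma_plus_rp using ep by (intro Limsup_ereal_mult_left) auto
    finally show "sigma_plus v \<le> ereal (1 + \<epsilon>) * sigma_plus u" .
  qed
qed

lemma sigma_minus_mono:
  assumes "u \<le> v"
  shows "sigma_minus u \<le> sigma_minus v"
proof (cases "u = v")
  case True then show ?thesis by simp
next
  case False
  then have uv: "u < v" using assms by simp
  show ?thesis
  proof (rule eps_minus[OF _ sigma_minus_nonneg])
    fix \<epsilon> :: real assume ep: "0 < \<epsilon>" "\<epsilon> < 1"
    have ev: "eventually (\<lambda>z. z powr (u - v) < \<epsilon>) at_top"
      using order_tendstoD(2)[OF powr_neg_tendsto[OF uv] ep(1)] .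
    have "eventually (\<lambda>z. ereal (1 - \<epsilon>) * ereal (rm u z) \<le> ereal (rm v z)) at_top"
      using ev eventually_ge_at_top[of "4::real"]
    proof eventually_elim
      case (elim z)
      have "(1 - \<epsilon>) * rm u z \<le> (1 - z powr (u - v)) * rm u z"
        using elim(1) rm_nonneg by (intro mult_right_mono) auto
      also have "\<dots> \<le> rm v z" by (rule rm_mono_step[OF elim(2) uv])
      finally show ?case by simp
    qed
    then have "Liminf at_top (\<lambda>z. ereal (1 - \<epsilon>) * ereal (rm u z)) \<le> sigma_minus v"
      unfolding sigma_minus_rm by (rule Liminf_mono)
    moreover have "Liminf at_top (\<lambda>z. ereal (1 - \<epsilon>) * ereal (rm u z)) = ereal (1 - \<epsilon>) * sigma_minus u"
      unfolding sigma_minus_rm using ep by (intro Liminf_ereal_mult_left) auto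
    ultimately show "ereal (1 - \<epsilon>) * sigma_minus u \<le> sigma_minus v" by simp
  qed
qed

lemma err_small:
  fixes a :: nat
  assumes z: "z \<ge> 4" and u: "u \<ge> real (8 * a + 15)"
  shows "z ^ (8 * a + 13) / (mertens_prod z * z powr u) \<le> 1 / z"
proof -
  have W: "1 / z \<le> mertens_prod z" using mertens_lower z by simp
  have zu: "z ^ (8 * a + 15) \<le> z powr u"
  proof -
    have "z powr real (8 * a + 15) \<le> z powr u" using z u by (intro powr_mono) auto
    moreover have "z powr real (8 * a + 15) = z ^ (8 * a + 15)" using z by (intro powr_realpow) auto
    ultimately show ?thesis by simp
  qed
  have pos: "0 < z ^ (8 * a + 15)" using z by simp
  have "z ^ (8 * a + 13) / (mertens_prod z * z powr u) \<le> z ^ (8 * a + 13) / ((1 / z) * z ^ (8 * a + 15))"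
  proof (rule divide_left_mono)
    show "1 / z * z ^ (8 * a + 15) \<le> mertens_prod z * z powr u"
      using W zu pos z mertens_nonneg by (intro mult_mono) auto
    show "0 \<le> z ^ (8 * a + 13)" using z by simp
    show "0 < mertens_prod z * z powr u * (1 / z * z ^ (8 * a + 15))"
    proof -
      have "0 < 1 / z" using z by simp
      then have "0 < mertens_prod z" using W by linarith
      then show ?thesis using z pos by (intro mult_pos_pos) auto
    qed
  qed
  also have "\<dots> = 1 / z"
  proof -
    have "8 * a + 15 = Suc (Suc (8 * a + 13))" by simp
    then have "z ^ (8 * a + 15) = z ^ (8 * a + 13) * z * z" by (simp only: power_Suc mult_ac)
    then show ?thesis using z by (simp add: field_simps)
  qed
  finally show ?thesis .
qed

lemma ratio_bounds:
  fixes a :: nat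
  assumes z: "z \<ge> 4" and u: "u \<ge> real (8 * a + 15)"
  shows "rp u z \<le> exp (exp 16 / 4 ^ a) + 2 / z"
    "1 - (exp 16 / 4 ^ a) * exp (exp 16 / 4 ^ a) - 2 / z \<le> rm u z"
proof -
  define Y where "Y = z powr u"
  define W where "W = mertens_prod z"
  define \<delta> where "\<delta> = (exp 16 / 4 ^ a :: real)"
  have Y0: "Y > 0" unfolding Y_def using z by simp
  have W0: "W > 0"
  proof -
    have "0 < 1 / z" using z by simp
    then show ?thesis using mertens_lower[of z] z unfolding W_def by linarith
  qed
  have es: "z ^ (8 * a + 13) / (W * Y) \<le> 1 / z" unfolding W_def Y_def by (rule err_small[OF z u])
  have "real (sieve_S_plus Y z) \<le> Y * W * exp \<delta> + z ^ (8 * a + 13)"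
    unfolding W_def \<delta>_def using Y0 by (intro Splus_le_bound FL(1)[OF z]) auto
  then have "rp u z \<le> (Y * W * exp \<delta> + z ^ (8 * a + 13)) / (W * Y)"
    unfolding rp_def W_def[symmetric] Y_def[symmetric] using W0 Y0 by (intro divide_right_mono) auto
  also have "\<dots> = exp \<delta> + z ^ (8 * a + 13) / (W * Y)" using W0 Y0 by (simp add: field_simps)
  also have "\<dots> \<le> exp \<delta> + 2 / z"
  proof -
    have "1 / z \<le> 2 / z" using z by (intro divide_right_mono) auto
    then show ?thesis using es by linarith
  qed
  finally show "rp u z \<le> exp (exp 16 / 4 ^ a) + 2 / z" unfolding \<delta>_def .
  have "Y * W * (1 - \<delta> * exp \<delta>) - 2 * z ^ (8 * a + 13) \<le> real (sieve_S_minus Y z)"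
    unfolding W_def \<delta>_def using Y0 by (intro Sminus_ge_bound FL(2)[OF z]) auto
  then have "(Y * W * (1 - \<delta> * exp \<delta>) - 2 * z ^ (8 * a + 13)) / (W * Y) \<le> rm u z"
    unfolding rm_def W_def[symmetric] Y_def[symmetric] using W0 Y0 by (intro divide_right_mono) auto
  moreover have "(Y * W * (1 - \<delta> * exp \<delta>) - 2 * z ^ (8 * a + 13)) / (W * Y)
      = (1 - \<delta> * exp \<delta>) - 2 * (z ^ (8 * a + 13) / (W * Y))" using W0 Y0 by (simp add: field_simps)
  moreover have "2 * (z ^ (8 * a + 13) / (W * Y)) \<le> 2 / z" using es by simp
  ultimately show "1 - (exp 16 / 4 ^ a) * exp (exp 16 / 4 ^ a) - 2 / z \<le> rm u z" unfolding \<delta>_def by linarith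
qed

lemma inv_z_tendsto: "((\<lambda>z::real. c + 2 / z) \<longlongrightarrow> c) at_top"
proof -
  have "((\<lambda>z::real. 2 / z) \<longlongrightarrow> 0) at_top" by (intro tendsto_divide_0[OF tendsto_const] filterlim_at_top_imp_at_infinity[OF filterlim_ident]) 
  then show ?thesis using tendsto_add[OF tendsto_const[of c], of "\<lambda>z. 2 / z" 0 at_top] by simp
qed

lemma inv_z_tendsto': "((\<lambda>z::real. c - 2 / z) \<longlongrightarrow> c) at_top"
proof -
  have "((\<lambda>z::real. 2 / z) \<longlongrightarrow> 0) at_top" by (intro tendsto_divide_0[OF tendsto_const] filterlim_at_top_imp_at_infinity[OF filterlim_ident])
  then show ?thesis using tendsto_diff[OF tendsto_const[of c], of "\<lambda>z. 2 / z" 0 at_top] by simp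
qed

lemma sigma_bounds:
  fixes a :: nat
  assumes u: "u \<ge> real (8 * a + 15)"
  shows "sigma_plus u \<le> ereal (exp (exp 16 / 4 ^ a))"
    "ereal (1 - (exp 16 / 4 ^ a) * exp (exp 16 / 4 ^ a)) \<le> sigma_plus u"
    "sigma_minus u \<le> ereal (exp (exp 16 / 4 ^ a))"
    "ereal (1 - (exp 16 / 4 ^ a) * exp (exp 16 / 4 ^ a)) \<le> sigma_minus u"
proof -
  define hi where "hi = exp (exp 16 / 4 ^ a :: real)"
  define lo where "lo = 1 - (exp 16 / 4 ^ a) * exp (exp 16 / 4 ^ a :: real)"
  have up: "eventually (\<lambda>z. ereal (rp u z) \<le> ereal (hi + 2 / z)) at_top"
    using eventually_ge_at_top[of "4::real"] by eventually_elim (use ratio_bounds(1)[OF _ u] hi_def in auto)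
  have dn: "eventually (\<lambda>z. ereal (lo - 2 / z) \<le> ereal (rm u z)) at_top"
    using eventually_ge_at_top[of "4::real"] by eventually_elim (use ratio_bounds(2)[OF _ u] lo_def in auto)
  have Lhi: "Limsup at_top (\<lambda>z. ereal (hi + 2 / z)) = ereal hi"
    by (intro lim_imp_Limsup) (auto intro!: tendsto_ereal inv_z_tendsto)
  have Llo: "Liminf at_top (\<lambda>z. ereal (lo - 2 / z)) = ereal lo"
    by (intro lim_imp_Liminf) (auto intro!: tendsto_ereal inv_z_tendsto')
  have a: "sigma_plus u \<le> ereal hi" unfolding sigma_plus_rp using Limsup_mono[OF up] Lhi by simp
  have b: "ereal lo \<le> sigma_minus u" unfolding sigma_minus_rm using Liminf_mono[OF dn] Llo by simp
  have c: "sigma_minus u \<le> sigma_plus u"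
  proof -
    have "sigma_minus u \<le> Liminf at_top (\<lambda>z. ereal (rp u z))"
      unfolding sigma_minus_rm by (intro Liminf_mono) (auto simp: rm_le_rp)
    also have "\<dots> \<le> sigma_plus u" unfolding sigma_plus_rp by (intro Liminf_le_Limsup) simp
    finally show ?thesis .
  qed
  show "sigma_plus u \<le> ereal (exp (exp 16 / 4 ^ a))" using a hi_def by simp
  show "ereal (1 - (exp 16 / 4 ^ a) * exp (exp 16 / 4 ^ a)) \<le> sigma_plus u" using b c lo_def by simp
  show "sigma_minus u \<le> ereal (exp (exp 16 / 4 ^ a))" using a c hi_def by simp
  show "ereal (1 - (exp 16 / 4 ^ a) * exp (exp 16 / 4 ^ a)) \<le> sigma_minus u" using b lo_def by simp
qed

lemma delta_lim: "((\<lambda>a::nat. exp 16 / 4 ^ a :: real) \<longlongrightarrow> 0) sequentially"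
proof -
  have "((\<lambda>a::nat. (1/4::real) ^ a) \<longlongrightarrow> 0) sequentially" by (rule LIMSEQ_realpow_zero) auto
  then have "((\<lambda>a::nat. exp 16 * (1/4::real) ^ a) \<longlongrightarrow> exp 16 * 0) sequentially"
    by (intro tendsto_mult tendsto_const)
  then show ?thesis by (simp add: power_one_over)
qed

lemma hi_lim: "((\<lambda>a::nat. ereal (exp (exp 16 / 4 ^ a))) \<longlongrightarrow> 1) sequentially"
proof -
  have "((\<lambda>a::nat. exp (exp 16 / 4 ^ a :: real)) \<longlongrightarrow> exp 0) sequentially"
    by (intro tendsto_exp delta_lim)
  then show ?thesis by (simp add: one_ereal_def tendsto_ereal)
qed

lemma lo_lim: "((\<lambda>a::nat. ereal (1 - (exp 16 / 4 ^ a) * exp (exp 16 / 4 ^ a))) \<longlongrightarrow> 1) sequentially"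
proof -
  have "((\<lambda>a::nat. 1 - (exp 16 / 4 ^ a) * exp (exp 16 / 4 ^ a :: real)) \<longlongrightarrow> 1 - 0 * exp 0) sequentially"
    by (intro tendsto_diff tendsto_const tendsto_mult tendsto_exp delta_lim)
  then show ?thesis by (simp add: one_ereal_def tendsto_ereal)
qed

lemma squeeze_to_one:
  fixes f :: "real \<Rightarrow> ereal"
  assumes h: "\<And>a u. u \<ge> real (8 * a + 15) \<Longrightarrow>
      ereal (1 - (exp 16 / 4 ^ a) * exp (exp 16 / 4 ^ a)) \<le> f u \<and> f u \<le> ereal (exp (exp 16 / 4 ^ a))"
  shows "(f \<longlongrightarrow> 1) at_top"
proof (rule order_tendstoI)
  fix b :: ereal assume b: "b < 1"
  have "eventually (\<lambda>a. b < ereal (1 - (exp 16 / 4 ^ a) * exp (exp 16 / 4 ^ a))) sequentially"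
    by (rule order_tendstoD(1)[OF lo_lim b])
  then obtain a where a: "b < ereal (1 - (exp 16 / 4 ^ a) * exp (exp 16 / 4 ^ a))"
    by (auto simp: eventually_sequentially)
  show "eventually (\<lambda>u. b < f u) at_top"
    using eventually_ge_at_top[of "real (8 * a + 15)"]
    by eventually_elim (use h a in \<open>blast intro: less_le_trans\<close>)
next
  fix b :: ereal assume b: "b > 1"
  have "eventually (\<lambda>a. ereal (exp (exp 16 / 4 ^ a)) < b) sequentially"
    by (rule order_tendstoD(2)[OF hi_lim b])
  then obtain a where a: "ereal (exp (exp 16 / 4 ^ a)) < b"
    by (auto simp: eventually_sequentially)
  show "eventually (\<lambda>u. f u < b) at_top"
    using eventually_ge_at_top[of "real (8 * a + 15)"]
    by eventually_elim (use h a in \<open>blast intro: le_less_trans\<close>)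
qed

theorem lemma1:
  shows "(\<forall>u v. 1 \<le> u \<longrightarrow> u \<le> v \<longrightarrow> sigma_plus v \<le> sigma_plus u)
       \<and> (\<forall>u v. 1 \<le> u \<longrightarrow> u \<le> v \<longrightarrow> sigma_minus u \<le> sigma_minus v)
       \<and> (sigma_plus \<longlongrightarrow> 1) at_top
       \<and> (sigma_minus \<longlongrightarrow> 1) at_top"
proof (intro conjI allI impI)
  fix u v :: real assume "1 \<le> u" "u \<le> v"
  then show "sigma_plus v \<le> sigma_plus u" by (intro sigma_plus_mono) 
next
  fix u v :: real assume "1 \<le> u" "u \<le> v"
  then show "sigma_minus u \<le> sigma_minus v" by (intro sigma_minus_mono)
next
  show "(sigma_plus \<longlongrightarrow> 1) at_top"
    by (rule squeeze_to_one) (use sigma_bounds(1,2) in blast)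
next
  show "(sigma_minus \<longlongrightarrow> 1) at_top"
    by (rule squeeze_to_one) (use sigma_bounds(3,4) in blast)
qed

end
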